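(* Let $q\in(0,1)$, let $(R_n(x;q))_{n\in\mathbb{N}_0}$ be the little $q$-Legendre polynomials, and for $x\in\mathbb{R}$ let $\alpha_x(m)=R_m(x;q)$ ($m\in\mathbb{N}_0$). Let $K:=\left\lceil\frac{\log4}{\log\frac{1}{q}}-1\right\rceil$. Then $\alpha_{1-q^n}(n+k)\neq0$ and \[\left|\frac{\alpha_{1-q^n}(n+k+1)}{\alpha_{1-q^n}(n+k)q^{k+1}}\right|<4\] for all $n\in\mathbb{N}_0$ and all $k\in\mathbb{N}_0$ with $k\ge K$. For every $n\in\mathbb{N}_0$, the sequence $(\alpha_{1-q^n}(n+k))_{k\ge K}$ oscillates around its limit $0$, i.e. $\frac{\alpha_{1-q^n}(n+k+1)}{\alpha_{1-q^n}(n+k)}<0$ for all $k\ge K$, and the sequence $(|\alpha_{1-q^n}(n+k)|)_{k\ge K}$ is strictly decreasing. Moreover, \[|\alpha_{1-q^n}(n+K+k)|\le4^kq^{\frac{(2K+k+1)k}{2}}|\alpha_{1-q^n}(n+K)|\le4^kq^{\frac{(2K+k+1)k}{2}}\] for all $n,k\in\mathbb{N}_0$.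
   Context: For $q\in(0,1)$, the little $q$-Legendre polynomials are defined by $R_0(x;q)=1$, $R_1(x;q)=(x-b_0)/a_0$ and $R_1(x;q)R_n(x;q)=a_nR_{n+1}(x;q)+b_nR_n(x;q)+c_nR_{n-1}(x;q)$ for $n\ge1$, where $a_0=\frac{1}{q+1}$, $b_0=\frac{q}{q+1}$, and for $n\ge1$: $a_n=q^n\frac{(1+q)(1-q^{n+1})}{(1-q^{2n+1})(1+q^{n+1})}$, $c_n=q^n\frac{(1+q)(1-q^n)}{(1-q^{2n+1})(1+q^n)}$, $b_n=1-a_n-c_n=\frac{(1-q^n)(1-q^{n+1})}{(1+q^n)(1+q^{n+1})}$. They are normalized by $R_n(1;q)=1$. *)

theory Defs
  imports Complex_Main
begin

definition lqa :: "real \<Rightarrow> nat \<Rightarrow> real" where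
  "lqa q n = (if n = 0 then 1 / (q + 1)
     else q ^ n * ((1 + q) * (1 - q ^ (n + 1))) / ((1 - q ^ (2 * n + 1)) * (1 + q ^ (n + 1))))"

definition lqc :: "real \<Rightarrow> nat \<Rightarrow> real" where
  "lqc q n = (if n = 0 then 0
     else q ^ n * ((1 + q) * (1 - q ^ n)) / ((1 - q ^ (2 * n + 1)) * (1 + q ^ n)))"

definition lqb :: "real \<Rightarrow> nat \<Rightarrow> real" where
  "lqb q n = (if n = 0 then q / (q + 1) else 1 - lqa q n - lqc q n)"

text \<open>Pairs (R_n, R_{n+1}) of little q-Legendre polynomials evaluated at x.\<close>
fun lqL_pair :: "real \<Rightarrow> real \<Rightarrow> nat \<Rightarrow> real \<times> real" where
  "lqL_pair q x 0 = (1, (x - lqb q 0) / lqa q 0)"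
| "lqL_pair q x (Suc n) =
    (let (r0, r1) = lqL_pair q x n;
         R1 = (x - lqb q 0) / lqa q 0
     in (r1, ((R1 - lqb q (Suc n)) * r1 - lqc q (Suc n) * r0) / lqa q (Suc n)))"

definition littleqLegendre :: "real \<Rightarrow> nat \<Rightarrow> real \<Rightarrow> real" where
  "littleqLegendre q n x = fst (lqL_pair q x n)"

end

theory Submission
  imports Defs
begin

definition qp :: "real \<Rightarrow> real \<Rightarrow> nat \<Rightarrow> real" where
  "qp q a j = (\<Prod>i<j. (1 - a * q ^ i))"

lemma qp_0[simp]: "qp q a 0 = 1" by (simp add: qp_def)
lemma qp_Suc: "qp q a (Suc j) = qp q a j * (1 - a * q ^ j)"
  by (simp add: qp_def)
lemma qp_shift: "qp q a (Suc j) = (1 - a) * qp q (a * q) j"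
proof (induction j)
  case 0 then show ?case by (simp add: qp_def)
next
  case (Suc j)
  have "qp q a (Suc (Suc j)) = qp q a (Suc j) * (1 - a * q ^ Suc j)" by (rule qp_Suc)
  also have "\<dots> = (1 - a) * qp q (a * q) j * (1 - a * q * q ^ j)" using Suc by (simp add: mult.assoc)
  also have "\<dots> = (1 - a) * qp q (a * q) (Suc j)" by (simp add: qp_Suc)
  finally show ?case .
qed

lemma qp_pos: "0 < q \<Longrightarrow> q < 1 \<Longrightarrow> qp q q j > 0"
  unfolding qp_def
proof (intro prod_pos ballI)
  fix i assume "0 < q" "q < 1"
  then have "q * q ^ i < 1" using power_less_one_iff[of q "Suc i"] by simp
  then show "0 < 1 - q * q ^ i" by simp
qed

lemma qp_zero: "0 < q \<Longrightarrow> m < j \<Longrightarrow> qp q (1 / q ^ m) j = 0"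
  unfolding qp_def by (rule prod_zero) (auto intro!: bexI[of _ m])

definition Cf :: "real \<Rightarrow> nat \<Rightarrow> nat \<Rightarrow> real" where
  "Cf q m j = qp q (1 / q ^ m) j * qp q (q ^ (m + 1)) j / (qp q q j)\<^sup>2"

lemma Cf_zero: "0 < q \<Longrightarrow> m < j \<Longrightarrow> Cf q m j = 0"
  by (simp add: Cf_def qp_zero)

lemma Cf_0[simp]: "Cf q m 0 = 1" by (simp add: Cf_def)

lemma core_poly:
  fixes q A t a c :: real
  assumes ha: "a*((1-q*A^2)*(1+q*A)) = A*(1+q)*(1-q*A)"
    and hc: "c*((1-q*A^2)*(1+A)) = A*(1+q)*(1-A)"
  shows "((1-q*A^2)*(1+q*A)*(1+A)) * (a*(q*A-1)*(A-1)*(1-A*q^2*t)*(1-A*q^3*t)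
     - (a+c)*q*(A-1)*(A-q*t)*(1-A*q)*(1-A*q^2*t)
     + c*q*(A-q*t)*(A-q^2*t)*(1-A)*(1-A*q)
     + (1+q)*A*(A-1)*(1-A*q)*(1-q^2*t)^2) = 0"
  using ha hc by algebra

lemma core_poly1:
  fixes q A a c :: real
  assumes ha: "a*((1-q*A^2)*(1+q*A)) = A*(1+q)*(1-q*A)"
    and hc: "c*((1-q*A^2)*(1+A)) = A*(1+q)*(1-A)"
  shows "((1-q*A^2)*(1+q*A)*(1+A)) * (a*(q*A-1)*(1-q^2*A) - (a+c)*q*(A-1)*(1-q*A)
     + c*q*(A-q)*(1-A) + (1+q)*(1-q)^2*A) = 0"
  using ha hc by algebra

lemma core_E:
  fixes q A t a c :: real
  assumes q: "0 < q" "q < 1" and A: "0 < A" "A \<le> q"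
  assumes ha: "a*((1-q*A^2)*(1+q*A)) = A*(1+q)*(1-q*A)"
    and hc: "c*((1-q*A^2)*(1+A)) = A*(1+q)*(1-A)"
  shows "a*((1-1/A/q)*(1-1/A)*(1-A*q^2*t)*(1-A*q^3*t))
     - (a+c)*((1-1/A)*(1-1/A*q*t)*(1-A*q)*(1-A*q^2*t))
     + c*((1-1/A*q*t)*(1-1/A*q^2*t)*(1-A)*(1-A*q))
     + (1+q)/q*((1-1/A)*(1-A*q)*(1-q^2*t)^2) = 0" (is "?E = 0")
proof -
  have D: "(1-q*A^2)*(1+q*A)*(1+A) \<noteq> 0"
  proof -
    have "q*A^2 < 1" using q A by (smt (verit) mult_less_cancel_left1 mult_pos_pos power2_eq_square power_less_one_iff)
    then show ?thesis using q A by (smt (verit) mult_pos_pos no_zero_divisors)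
  qed
  have "A^2*q*?E = a*(q*A-1)*(A-1)*(1-A*q^2*t)*(1-A*q^3*t)
     - (a+c)*q*(A-1)*(A-q*t)*(1-A*q)*(1-A*q^2*t)
     + c*q*(A-q*t)*(A-q^2*t)*(1-A)*(1-A*q)
     + (1+q)*A*(A-1)*(1-A*q)*(1-q^2*t)^2"
    using q A by (simp add: field_simps power2_eq_square)
  then have "((1-q*A^2)*(1+q*A)*(1+A)) * (A^2*q*?E) = 0" using core_poly[OF ha hc] by simp
  with D q A show ?thesis by simp
qed

lemma qp_R1: "q \<noteq> 0 \<Longrightarrow> qp q (B/q) (Suc (Suc i)) = (1-B/q)*(1-B)*qp q (B*q) i"
  by (simp add: qp_shift)
lemma qp_R2: "qp q B (Suc (Suc i)) = (1-B) * qp q (B*q) i * (1 - B*q*q^i)"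
  using qp_shift[of q B "Suc i"] qp_Suc[of q "B*q" i] by simp
lemma qp_R3: "qp q X (Suc (Suc i)) = qp q X i * (1-X*q^i) * (1 - X*q^(Suc i))"
  by (simp add: qp_Suc)

lemma lqa_form: "(m::nat) \<ge> 1 \<Longrightarrow> lqa q m = q^m*((1+q)*(1-q*q^m))/((1-q*(q^m)^2)*(1+q*q^m))"
proof -
  assume m: "m \<ge> 1"
  have "q^(2*m+1) = q*(q^m)^2" by (simp add: power_mult power_add mult.commute power2_eq_square)
  moreover have "q^(m+1) = q*q^m" by simp
  ultimately show ?thesis using m unfolding lqa_def by simp
qed

lemma lqc_form: "m \<ge> 1 \<Longrightarrow> lqc q m = q^m*((1+q)*(1-q^m))/((1-q*(q^m)^2)*(1+q^m))"
proof -
  assume m: "m \<ge> 1"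
  have "q^(2*m+1) = q*(q^m)^2" by (simp add: power_mult power_add mult.commute power2_eq_square)
  then show ?thesis using m unfolding lqc_def by simp
qed

lemma A_facts: "0 < (q::real) \<Longrightarrow> q < 1 \<Longrightarrow> m \<ge> 1 \<Longrightarrow> 0 < q^m \<and> q^m \<le> q \<and> q*(q^m)^2 < 1"
proof -
  assume q: "0 < q" "q < 1" and m: "m \<ge> 1"
  have "q^m \<le> q^1" using power_decreasing[of 1 m q] q m by simp
  moreover have "q^(2*m+1) < 1" using q power_Suc_less_one[of q "2*m"] by simp
  moreover have "q^(2*m+1) = q*(q^m)^2" by (simp add: power_mult power_add mult.commute power2_eq_square)
  ultimately show ?thesis using q by simp
qed

lemma ac_eqs:
  fixes q A a c :: real
  assumes "0 < q" "0 < A" "q*A^2 < 1"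
    and "a = A*((1+q)*(1-q*A))/((1-q*A^2)*(1+q*A))" "c = A*((1+q)*(1-A))/((1-q*A^2)*(1+A))"
  shows "a*((1-q*A^2)*(1+q*A)) = A*(1+q)*(1-q*A)" "c*((1-q*A^2)*(1+A)) = A*(1+q)*(1-A)"
proof -
  have "1+q*A > 0" "1 + A > 0" "1 - q*A^2 > 0" using assms by (simp_all add: add_pos_pos)
  then show "a*((1-q*A^2)*(1+q*A)) = A*(1+q)*(1-q*A)" "c*((1-q*A^2)*(1+A)) = A*(1+q)*(1-A)"
    using assms(4,5) by simp_all
qed

lemma Cf_contig:
  assumes q: "0<q" "q<1" and m: "m \<ge> 1"
  shows "lqa q m * Cf q (m+1) j = (lqa q m + lqc q m) * Cf q m j - lqc q m * Cf q (m-1) j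
           - (1+q)/q * (if j = 0 then 0 else Cf q m (j-1))"
proof -
  define A where "A = q^m"
  define a where "a = lqa q m"
  define c where "c = lqc q m"
  have Af: "0 < A" "A \<le> q" "q*A^2 < 1" using A_facts[OF q m] unfolding A_def by auto
  have ha: "a*((1-q*A^2)*(1+q*A)) = A*(1+q)*(1-q*A)" and hc: "c*((1-q*A^2)*(1+A)) = A*(1+q)*(1-A)"
    using ac_eqs[OF q(1) Af(1) Af(3), of a c] lqa_form[OF m, of q] lqc_form[OF m, of q]
    unfolding a_def c_def A_def by auto
  define B where "B = 1/A"
  have e1: "1/q^(m+1) = B/q" unfolding B_def A_def by simp
  have e2: "q^(m+1+1) = A*q*q" unfolding A_def by simp
  have e3: "1/q^(m-1) = B*q" unfolding B_def A_def using m q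
    by (metis (no_types, lifting) One_nat_def Suc_diff_le diff_Suc_1 divide_divide_eq_left' nonzero_eq_divide_eq
        order_less_irrefl power_Suc power_not_zero)
  have e4: "q^(m-1+1) = A" unfolding A_def using m by simp
  have e5: "q^(m+1) = A*q" unfolding A_def by simp
  have e6: "1/q^m = B" unfolding B_def A_def by simp
  show ?thesis
  proof (cases j)
    case 0 then show ?thesis by simp
  next
    case (Suc j')
    show ?thesis
    proof (cases j')
      case 0
      have "a*((1-B/q)*(1-A*q*q)) - (a+c)*((1-B)*(1-A*q)) + c*((1-B*q)*(1-A)) + (1+q)/q*(1-q)^2 = 0"
      proof -
        have "A*q*(a*((1-B/q)*(1-A*q*q)) - (a+c)*((1-B)*(1-A*q)) + c*((1-B*q)*(1-A)) + (1+q)/q*(1-q)^2)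
          = a*(q*A-1)*(1-q^2*A) - (a+c)*q*(A-1)*(1-q*A) + c*q*(A-q)*(1-A) + (1+q)*(1-q)^2*A"
          unfolding B_def using q Af by (simp add: field_simps power2_eq_square)
        moreover have "(1-q*A^2)*(1+q*A)*(1+A) \<noteq> 0" using q Af
          by (smt (verit) mult_pos_pos no_zero_divisors)
        ultimately show ?thesis using core_poly1[OF ha hc] q Af by simp
      qed
      moreover have cf: "Cf q (m+1) 1 = (1-B/q)*(1-A*q*q)/(1-q)^2" "Cf q m 1 = (1-B)*(1-A*q)/(1-q)^2"
        "Cf q (m-1) 1 = (1-B*q)*(1-A)/(1-q)^2"
        unfolding Cf_def e1 e2 e3 e4 e5 e6 by (simp_all add: qp_def B_def)
      moreover have "(1-q)^2 > 0" using q by simp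
      moreover have "a * Cf q (m+1) 1 - ((a+c)*Cf q m 1 - c*Cf q (m-1) 1 - (1+q)/q) =
         (a*((1-B/q)*(1-A*q*q)) - (a+c)*((1-B)*(1-A*q)) + c*((1-B*q)*(1-A)) + (1+q)/q*(1-q)^2)/(1-q)^2"
        unfolding cf using q by (simp add: field_simps)
      ultimately show ?thesis using Suc 0 unfolding a_def[symmetric] c_def[symmetric] by simp
    next
      case (Suc i)
      have jj: "j = Suc (Suc i)" using \<open>j = Suc j'\<close> Suc by simp
      define U where "U = qp q (B*q) i"
      define V where "V = qp q (A*q*q) i"
      define W where "W = qp q q (Suc i)"
      define t where "t = q^i"
      define Z where "Z = U*V/(W^2*(1-q^2*t)^2)"
      have p1: "qp q (B/q) (Suc (Suc i)) = (1-B/q)*(1-B)*U" unfolding U_def using qp_R1 q by simp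
      have p2: "qp q (A*q*q) (Suc (Suc i)) = V*(1-A*q^2*t)*(1-A*q^3*t)"
        unfolding V_def t_def using qp_R3[of q "A*q*q" i] by (simp add: power3_eq_cube power2_eq_square mult.assoc mult.left_commute)
      have p3: "qp q B (Suc (Suc i)) = (1-B)*U*(1-B*q*t)" unfolding U_def t_def using qp_R2 by simp
      have p4: "qp q (A*q) (Suc (Suc i)) = (1-A*q)*V*(1-A*q^2*t)"
        unfolding V_def t_def using qp_R2[of q "A*q" i] by (simp add: power2_eq_square mult.assoc mult.left_commute)
      have p5: "qp q (B*q) (Suc (Suc i)) = U*(1-B*q*t)*(1-B*q^2*t)"
        unfolding U_def t_def using qp_R3[of q "B*q" i] by (simp add: power2_eq_square mult.assoc mult.left_commute)
      have p6: "qp q A (Suc (Suc i)) = (1-A)*(1-A*q)*V"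
        unfolding V_def using qp_shift[of q A "Suc i"] qp_shift[of q "A*q" i] by simp
      have p7: "qp q q (Suc (Suc i)) = W*(1-q^2*t)"
        unfolding W_def t_def using qp_Suc[of q q "Suc i"] by (simp add: power2_eq_square mult.assoc)
      have p8: "qp q B (Suc i) = (1-B)*U" unfolding U_def using qp_shift by simp
      have p9: "qp q (A*q) (Suc i) = (1-A*q)*V" unfolding V_def using qp_shift by simp
      have Wp: "W > 0" unfolding W_def using qp_pos q by simp
      have tp: "1 - q^2*t > 0"
      proof -
        have "q^2*t = q^(Suc (Suc i))" unfolding t_def by (simp add: power2_eq_square)
        moreover have "q^(Suc (Suc i)) < 1" using power_Suc_less_one q by blast
        ultimately show ?thesis by simp
      qed
      have C1: "Cf q (m+1) j = ((1-B/q)*(1-B)*(1-A*q^2*t)*(1-A*q^3*t)) * Z"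
        unfolding Cf_def jj e1 e2 p1 p2 p7 Z_def using Wp tp q by (simp add: field_simps power2_eq_square)
      have C2: "Cf q m j = ((1-B)*(1-B*q*t)*(1-A*q)*(1-A*q^2*t)) * Z"
        unfolding Cf_def jj e5 e6 p3 p4 p7 Z_def using Wp tp q by (simp add: field_simps power2_eq_square)
      have C3: "Cf q (m-1) j = ((1-B*q*t)*(1-B*q^2*t)*(1-A)*(1-A*q)) * Z"
        unfolding Cf_def jj e3 e4 p5 p6 p7 Z_def using Wp tp q by (simp add: field_simps power2_eq_square)
      have C4: "Cf q m (j-1) = ((1-B)*(1-A*q)*(1-q^2*t)^2) * Z"
      proof -
        have jm: "j - 1 = Suc i" using jj by simp
        have nz: "1 - q^2*t \<noteq> 0" "W \<noteq> 0" using tp Wp by auto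
        show ?thesis unfolding Cf_def jm e5 e6 p8 p9 W_def[symmetric] Z_def using nz
          by (simp add: field_simps)
      qed
      have E: "a*((1-1/A/q)*(1-1/A)*(1-A*q^2*t)*(1-A*q^3*t))
     - (a+c)*((1-1/A)*(1-1/A*q*t)*(1-A*q)*(1-A*q^2*t))
     + c*((1-1/A*q*t)*(1-1/A*q^2*t)*(1-A)*(1-A*q))
     + (1+q)/q*((1-1/A)*(1-A*q)*(1-q^2*t)^2) = 0"
        by (rule core_E[OF q Af(1) Af(2) ha hc])
      have "a * Cf q (m+1) j - ((a + c) * Cf q m j - c * Cf q (m-1) j - (1+q)/q * Cf q m (j-1))
          = Z * (a*((1-1/A/q)*(1-1/A)*(1-A*q^2*t)*(1-A*q^3*t))
     - (a+c)*((1-1/A)*(1-1/A*q*t)*(1-A*q)*(1-A*q^2*t))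
     + c*((1-1/A*q*t)*(1-1/A*q^2*t)*(1-A)*(1-A*q))
     + (1+q)/q*((1-1/A)*(1-A*q)*(1-q^2*t)^2))"
        unfolding C1 C2 C3 C4 B_def by (simp add: algebra_simps)
      then show ?thesis using E jj unfolding a_def c_def by simp
    qed
  qed
qed

definition P :: "real \<Rightarrow> nat \<Rightarrow> real \<Rightarrow> real" where
  "P q m w = (\<Sum>j\<le>m. Cf q m j * w^j)"

lemma P_ext: assumes "0 < q" "m \<le> M" shows "P q m w = (\<Sum>j\<le>M. Cf q m j * w^j)"
  unfolding P_def using assms Cf_zero[OF assms(1)]
  by (intro sum.mono_neutral_left) auto

lemma P_0[simp]: "P q 0 w = 1" by (simp add: P_def)

lemma Cf11: "0 < (q::real) \<Longrightarrow> q < 1 \<Longrightarrow> (1 - 1/q)*(1-q^2)/(1-q)^2 = - (1+q)/q"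
proof -
  assume q: "0 < q" "q < 1"
  have a: "1 - 1/q = - (1-q)/q" using q by (simp add: field_simps)
  have b: "1 - q^2 = (1-q)*(1+q)" by (simp add: algebra_simps power2_eq_square)
  have c: "1 - q \<noteq> 0" using q by simp
  have d: "q \<noteq> 0" using q by simp
  have e: "(- (1-q)/q) * ((1-q)*(1+q)) = (-(1+q)/q) * (1-q)^2" using d by (simp add: field_simps power2_eq_square)
  show ?thesis unfolding a b e using c by simp
qed

lemma P_1: "0 < q \<Longrightarrow> q < 1 \<Longrightarrow> P q 1 w = 1 - (1+q)/q * w"
proof -
  assume q: "0 < q" "q < 1"
  have "Cf q 1 1 = (1 - 1/q)*(1-q^2)/(1-q)^2" by (simp add: Cf_def qp_def power2_eq_square)
  also have "\<dots> = - (1+q)/q" using Cf11 q by blast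
  finally have cf: "Cf q 1 1 = - (1+q)/q" .
  have "P q 1 w = 1 + Cf q 1 1 * w" by (simp add: P_def)
  then show ?thesis unfolding cf by (simp add: algebra_simps diff_divide_distrib add_divide_distrib)
qed

lemma P_rec:
  assumes q: "0<q" "q<1" and m: "m \<ge> 1"
  shows "lqa q m * P q (m+1) w = (lqa q m + lqc q m) * P q m w - lqc q m * P q (m-1) w
           - (1+q)/q * w * P q m w"
proof -
  let ?a = "lqa q m" and ?c = "lqc q m"
  have "?a * P q (m+1) w = (\<Sum>j\<le>m+1. ?a * Cf q (m+1) j * w^j)"
    unfolding P_def by (simp only: sum_distrib_left mult.assoc)
  also have "\<dots> = (\<Sum>j\<le>m+1. ((?a + ?c) * Cf q m j - ?c * Cf q (m-1) j
           - (1+q)/q * (if j = 0 then 0 else Cf q m (j-1))) * w^j)"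
    using Cf_contig[OF q m] by simp
  also have "\<dots> = (?a + ?c) * (\<Sum>j\<le>m+1. Cf q m j * w^j) - ?c * (\<Sum>j\<le>m+1. Cf q (m-1) j * w^j)
      - (1+q)/q * (\<Sum>j\<le>m+1. (if j = 0 then 0 else Cf q m (j-1)) * w^j)"
  proof -
    have "(\<Sum>j\<le>m+1. ((?a + ?c) * Cf q m j - ?c * Cf q (m-1) j
           - (1+q)/q * (if j = 0 then 0 else Cf q m (j-1))) * w^j)
      = (\<Sum>j\<le>m+1. (?a + ?c) * (Cf q m j * w^j) - ?c * (Cf q (m-1) j * w^j)
           - (1+q)/q * ((if j = 0 then 0 else Cf q m (j-1)) * w^j))"
      by (rule sum.cong) (simp_all add: algebra_simps)
    then show ?thesis by (simp only: sum_subtractf sum_distrib_left)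
  qed
  also have "(\<Sum>j\<le>m+1. (if j = 0 then 0 else Cf q m (j-1)) * w^j) = w * P q m w"
  proof -
    have "(\<Sum>j\<le>m+1. (if j = 0 then 0 else Cf q m (j-1)) * w^j)
        = (\<Sum>j\<le>m. (if Suc j = 0 then 0 else Cf q m (Suc j-1)) * w^(Suc j)) + 0"
      using sum.atMost_Suc_shift[of "\<lambda>j. (if j = 0 then 0 else Cf q m (j-1)) * w^j" m] by simp
    also have "\<dots> = w * P q m w" unfolding P_def by (simp add: sum_distrib_left algebra_simps)
    finally show ?thesis .
  qed
  also have "(\<Sum>j\<le>m+1. Cf q m j * w^j) = P q m w" by (rule P_ext[OF q(1), symmetric]) simp
  also have "(\<Sum>j\<le>m+1. Cf q (m-1) j * w^j) = P q (m-1) w" by (rule P_ext[OF q(1), symmetric]) simp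
  finally show ?thesis by (simp add: mult.assoc)
qed

lemma lqa_pos: "0 < q \<Longrightarrow> q < 1 \<Longrightarrow> lqa q m > 0"
proof (cases "m = 0")
  case True
  assume "0 < q" "q < 1" then show ?thesis using True by (simp add: lqa_def)
next
  case False
  assume q: "0 < q" "q < 1"
  have "q^(m+1) < 1" "q^(2*m+1) < 1" using q power_Suc_less_one by auto
  moreover have "lqa q m = q^m*((1+q)*(1-q^(m+1)))/((1-q^(2*m+1))*(1+q^(m+1)))"
    using False by (simp add: lqa_def)
  ultimately show ?thesis using q by (simp add: add_pos_pos)
qed

lemma lqL_P:
  assumes q: "0<q" "q<1"
  shows "lqL_pair q x n = (P q n (q*(1-x)), P q (n+1) (q*(1-x)))"
proof (induction n)
  case 0
  have "(x - lqb q 0) / lqa q 0 = 1 - (1+q)/q * (q*(1-x))" using q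
    by (simp add: lqa_def lqb_def field_simps)
  then show ?case using P_1[OF q] by simp
next
  case (Suc n)
  let ?w = "q*(1-x)"
  have R1: "(x - lqb q 0) / lqa q 0 = 1 - (1+q)/q * ?w" using q
    by (simp add: lqa_def lqb_def field_simps)
  have b: "lqb q (Suc n) = 1 - lqa q (Suc n) - lqc q (Suc n)" by (simp add: lqb_def)
  have ap: "lqa q (Suc n) > 0" using lqa_pos q by blast
  have rec: "lqa q (Suc n) * P q (Suc n + 1) ?w = (lqa q (Suc n) + lqc q (Suc n)) * P q (Suc n) ?w
     - lqc q (Suc n) * P q n ?w - (1+q)/q * ?w * P q (Suc n) ?w"
    using P_rec[OF q, of "Suc n" ?w] by simp
  have eq: "P q (Suc (Suc n)) ?w = (((x - lqb q 0) / lqa q 0 - lqb q (Suc n)) * P q (Suc n) ?w - lqc q (Suc n) * P q n ?w)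
        / lqa q (Suc n)"
    unfolding R1 using rec ap unfolding b by (simp add: field_simps)
  show ?case by (simp add: Suc.IH eq Let_def)
qed

lemma littleqLegendre_P: "0<q \<Longrightarrow> q<1 \<Longrightarrow> littleqLegendre q n x = P q n (q*(1-x))"
  using lqL_P unfolding littleqLegendre_def by simp

definition mu :: "real \<Rightarrow> nat \<Rightarrow> real" where "mu q m = 1/q^m + q^(m+1)"

lemma Cf_step:
  assumes q: "0 < q" "q < 1"
  shows "(1-q^(j+1))^2 * Cf q m (j+1) = (1 - mu q m * q^j + q^(2*j+1)) * Cf q m j"
proof -
  have pos: "qp q q j > 0" using qp_pos q by blast
  have nz: "1 - q*q^j \<noteq> 0" using q power_Suc_less_one[of q j] by simp
  have e: "(1 - 1/q^m*q^j)*(1 - q^(m+1)*q^j) = 1 - mu q m * q^j + q^(2*j+1)"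
    unfolding mu_def using q by (simp add: field_simps power_add power_mult power2_eq_square)
  have "Cf q m (j+1) = Cf q m j * ((1 - 1/q^m*q^j)*(1 - q^(m+1)*q^j)) / (1-q*q^j)^2"
    unfolding Cf_def using pos nz by (simp add: qp_Suc field_simps power2_eq_square)
  then show ?thesis unfolding e using nz by (simp add: field_simps)
qed

lemma P_func:
  assumes q: "0 < q" "q < 1"
  shows "P q m w - 2 * P q m (q*w) + P q m (q^2*w)
       = w * (P q m w - mu q m * P q m (q*w) + q * P q m (q^2*w))"
proof -
  have ext: "\<And>v. P q m v = (\<Sum>j\<le>m+1. Cf q m j * v^j)" by (rule P_ext[OF q(1)]) simp
  have "P q m w - 2 * P q m (q*w) + P q m (q^2*w) = (\<Sum>j\<le>m+1. Cf q m j * (1-q^j)^2 * w^j)"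
    unfolding ext
    by (simp add: sum_distrib_left sum_subtractf[symmetric] sum.distrib[symmetric] power_mult_distrib
        algebra_simps power2_eq_square)
  also have "\<dots> = (\<Sum>j\<le>m. Cf q m (Suc j) * (1-q^(Suc j))^2 * w^(Suc j)) + 0"
    using sum.atMost_Suc_shift[of "\<lambda>j. Cf q m j * (1-q^j)^2 * w^j" m] by simp
  also have "\<dots> = (\<Sum>j\<le>m. (1 - mu q m * q^j + q^(2*j+1)) * Cf q m j * w^(Suc j))"
    using Cf_step[OF q] by (simp add: mult.commute)
  also have "\<dots> = w * (\<Sum>j\<le>m. Cf q m j * w^j - mu q m * (Cf q m j * (q*w)^j) + q * (Cf q m j * (q^2*w)^j))"
    unfolding sum_distrib_left
  proof (rule sum.cong)
    fix x assume "x \<in> {..m}"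
    have "q^(x*2) = q^x*q^x" by (simp add: mult_2_right power_add)
    then show "(1 - mu q m * q^x + q^(2*x+1)) * Cf q m x * w^(Suc x) =
      w * (Cf q m x * w^x - mu q m * (Cf q m x * (q*w)^x) + q * (Cf q m x * (q^2*w)^x))"
      by (simp add: algebra_simps power_mult_distrib power2_eq_square power_mult[symmetric])
  qed simp
  also have "\<dots> = w * (P q m w - mu q m * P q m (q*w) + q * P q m (q^2*w))"
    unfolding P_def by (simp add: sum.distrib sum_subtractf sum_distrib_left)
  finally show ?thesis .
qed

context
  fixes q :: real and S :: "nat \<Rightarrow> nat \<Rightarrow> real" and K :: nat
  assumes q0: "0 < q" and q1: "q < 1"
    and S0: "\<And>k. S 0 k = 1"
    and Srec: "\<And>n k. (1-q^(n+1)) * S (n+1) k = (1-2*q^(k+1)+q^(2*n+1)*(q^(k+1))^2) * S n (k+1)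
                        - (1-q^n) * q * (q^(k+1))^2 * S (n-1) (k+2)"
    and K4: "q^(K+1) \<le> 1/4"
begin

lemma zK: "K \<le> k \<Longrightarrow> 0 < q^(k+1) \<and> 4*q^(k+1) \<le> 1"
proof -
  assume "K \<le> k"
  then have "q^(k+1) \<le> q^(K+1)" using q0 q1 by (intro power_decreasing) auto
  moreover have "0 < q^(k+1)" using q0 by simp
  ultimately show ?thesis using K4 by linarith
qed

lemma pq_pos: "n \<ge> 1 \<Longrightarrow> 0 < 1 - q^n"
  using q0 q1 power_less_one_iff[of q n] by simp

lemma pq_lt1: "1 - q^n \<le> 1" using q0 by simp

lemma key_ineq:
  fixes z :: real assumes z: "0 < z" "4*z \<le> 1"
  shows "4*(q*z^2) \<le> (1-2*z) * (1-2*q*z)"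
proof -
  have "1-2*z \<le> 1-2*q*z" using z q0 q1 by (simp add: mult_left_le_one_le)
  moreover have "0 \<le> 1-2*z" using z by simp
  ultimately have "(1-2*z)*(1-2*z) \<le> (1-2*z) * (1-2*q*z)"
    by (simp add: mult_left_mono)
  moreover have "q*z^2 \<le> z^2" using q1 z by (simp add: mult_le_cancel_right1)
  moreover have "2*z \<le> 1-2*z" using z by simp
  then have "(2*z)*(2*z) \<le> (1-2*z)*(1-2*z)" using z by (intro mult_mono) auto
  ultimately show ?thesis by (simp add: power2_eq_square)
qed

lemma Lpos: "\<forall>k\<ge>K. S n k > 0 \<and> S (n+1) k > 0 \<and>
    2*((1-q^(n+1)) * S (n+1) k) > (1-2*q^(k+1)) * S n (k+1)"
proof (induction n)
  case 0
  show ?case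
  proof (intro allI impI conjI)
    fix k assume k: "K \<le> k"
    define z where "z = q^(k+1)"
    have z: "0 < z" "4*z \<le> 1" using zK[OF k] unfolding z_def by auto
    have e: "(1-q) * S 1 k = 1 - 2*z + q*z^2" using Srec[of 0 k] S0 unfolding z_def by simp
    show "S 0 k > 0" using S0 by simp
    have qz2: "q*z^2 > 0" using z q0 by simp
    have "(1-q) * S 1 k > 0" using z qz2 e by linarith
    moreover have "1 - q > 0" using q1 by simp
    ultimately show "S (0+1) k > 0" by (simp add: zero_less_mult_iff)
    have "2*(1 - 2*z + q*z^2) > 1-2*z" using z qz2 by argo
    then show "2*((1-q^(0+1)) * S (0+1) k) > (1-2*q^(k+1)) * S 0 (k+1)"
      using e S0 unfolding z_def by simp
  qed
next
  case (Suc n)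
  show ?case
  proof (intro allI impI conjI)
    fix k assume k: "K \<le> k"
    define z where "z = q^(k+1)"
    have z: "0 < z" "4*z \<le> 1" using zK[OF k] unfolding z_def by auto
    have k1: "K \<le> k+1" using k by simp
    have zq: "q^(k+1+1) = q*z" unfolding z_def by simp
    define S1 where "S1 = S (n+1) (k+1)"
    define S0 where "S0 = S n (k+2)"
    have IH: "S0 > 0" "S1 > 0" "2*((1-q^(n+1)) * S1) > (1-2*(q*z)) * S0"
      using Suc.IH k1 zq unfolding S0_def S1_def by (auto simp: numeral_2_eq_2)
    show "S (Suc n) k > 0" using Suc.IH k by simp
    define A where "A = 1-2*z+q^(2*(n+1)+1)*z^2"
    define B where "B = (1-q^(n+1)) * q * z^2"
    have rec: "(1-q^(n+2)) * S (n+2) k = A * S1 - B * S0"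
      using Srec[of "n+1" k] unfolding A_def B_def z_def S0_def S1_def by (simp add: numeral_2_eq_2)
    have "q*z \<le> z" using z q1 by (simp add: mult_le_cancel_right1)
    then have hqz: "1-2*(q*z) > 0" using z by linarith
    have pn: "0 < 1-q^(n+1)" using pq_pos[of "n+1"] by simp
    have Bpos: "B > 0" unfolding B_def using pn q0 z by simp
    have s1: "(2*B) * ((1-2*(q*z)) * S0) < (2*B) * (2*((1-q^(n+1)) * S1))"
      using IH(3) Bpos by (intro mult_strict_left_mono) auto
    have "B * (1-q^(n+1)) \<le> q*z^2"
    proof -
      have "(1-q^(n+1)) * (1-q^(n+1)) \<le> 1" using pn pq_lt1[of "n+1"]
        by (simp add: mult_le_one)
      then have "((1-q^(n+1)) * (1-q^(n+1))) * (q*z^2) \<le> 1 * (q*z^2)"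
        using q0 z by (intro mult_right_mono) auto
      then show ?thesis unfolding B_def by (simp add: algebra_simps)
    qed
    then have "(B*(1-q^(n+1)))*(4*S1) \<le> (q*z^2)*(4*S1)"
      using IH(2) by (intro mult_right_mono) auto
    moreover have "(2*B) * (2*((1-q^(n+1)) * S1)) = (B*(1-q^(n+1)))*(4*S1)" by (simp add: algebra_simps)
    moreover have "(4*(q*z^2)) * S1 = (q*z^2)*(4*S1)" by (simp add: algebra_simps)
    ultimately have s2: "(2*B) * (2*((1-q^(n+1)) * S1)) \<le> (4*(q*z^2)) * S1" by simp
    have s3: "(4*(q*z^2)) * S1 \<le> ((1-2*z) * (1-2*q*z)) * S1"
      using key_ineq[OF z] IH(2) by (intro mult_right_mono) auto
    have "(1-2*(q*z)) * ((2*B)*S0) < (1-2*(q*z)) * ((1-2*z) * S1)"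
      using s1 s2 s3 by (simp add: algebra_simps)
    then have lt: "(2*B)*S0 < (1-2*z) * S1" using hqz by (simp add: mult_less_cancel_left)
    have "q^(2*(n+1)+1)*z^2 \<ge> 0" using q0 by simp
    then have "A \<ge> 1 - 2*z" unfolding A_def by linarith
    then have "A * S1 \<ge> (1-2*z) * S1" using IH(2) by (simp add: mult_right_mono)
    then have main: "2*((1-q^(n+2)) * S (n+2) k) > (1-2*z) * S1"
      using rec lt by linarith
    then show "2*((1-q^(Suc n+1)) * S (Suc n+1) k) > (1-2*q^(k+1)) * S (Suc n) (k+1)"
      unfolding z_def S1_def by (simp add: numeral_2_eq_2)
    have "(1-2*z) * S1 > 0" using z IH(2) by simp
    then have "(1-q^(n+2)) * S (n+2) k > 0" using main by linarith
    moreover have "1-q^(n+2) > 0" using pq_pos[of "n+2"] by simp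
    ultimately show "S (Suc n + 1) k > 0" by (simp add: zero_less_mult_iff numeral_2_eq_2)
  qed
qed

definition tt :: "nat \<Rightarrow> nat \<Rightarrow> real" where
  "tt n k = (1-q^n) * S n k / S (n-1) (k+1)"

lemma Spos: "K \<le> k \<Longrightarrow> S n k > 0" using Lpos by blast

lemma tt_low: "K \<le> k \<Longrightarrow> 2 * tt (n+1) k > 1 - 2*q^(k+1)"
proof -
  assume k: "K \<le> k"
  have "2*((1-q^(n+1)) * S (n+1) k) > (1-2*q^(k+1)) * S n (k+1)" using Lpos k by blast
  moreover have "S n (k+1) > 0" using Spos k by simp
  ultimately show ?thesis unfolding tt_def by (simp add: field_simps)
qed

lemma tt_pos: "K \<le> k \<Longrightarrow> n \<ge> 1 \<Longrightarrow> tt n k > 0"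
  unfolding tt_def using Spos pq_pos by simp

lemma tt_1: "K \<le> k \<Longrightarrow> tt 1 k = 1 - 2*q^(k+1) + q*(q^(k+1))^2"
proof -
  assume k: "K \<le> k"
  have "(1-q) * S 1 k = 1 - 2*q^(k+1) + q*(q^(k+1))^2" using Srec[of 0 k] S0 by simp
  then show ?thesis unfolding tt_def using S0 by simp
qed

lemma tt_rec: "K \<le> k \<Longrightarrow> n \<ge> 1 \<Longrightarrow>
  tt (n+1) k = (1-2*q^(k+1)+q^(2*n+1)*(q^(k+1))^2) - q*(q^(k+1))^2*(1-q^n)^2 / tt n (k+1)"
proof -
  assume k: "K \<le> k" and n: "n \<ge> 1"
  have k1: "K \<le> k+1" "K \<le> k+2" using k by auto
  have p1: "S n (k+1) > 0" "S (n-1) (k+2) > 0" using Spos k1 by auto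
  have pn: "1 - q^n > 0" using pq_pos n by simp
  have e: "tt n (k+1) = (1-q^n) * S n (k+1) / S (n-1) (k+2)" unfolding tt_def by simp
  have "tt (n+1) k = ((1-2*q^(k+1)+q^(2*n+1)*(q^(k+1))^2) * S n (k+1)
                        - (1-q^n) * q * (q^(k+1))^2 * S (n-1) (k+2)) / S n (k+1)"
    unfolding tt_def using Srec[of n k] by simp
  also have "\<dots> = (1-2*q^(k+1)+q^(2*n+1)*(q^(k+1))^2) - q*(q^(k+1))^2*(1-q^n)^2 / tt n (k+1)"
    unfolding e using p1 pn by (simp add: field_simps power2_eq_square)
  finally show ?thesis .
qed

lemma tt_mono: "\<forall>k\<ge>K. tt (Suc m + 1) k \<le> tt (Suc m) k"
proof (induction m)
  case 0
  show ?case
  proof (intro allI impI)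
    fix k assume k: "K \<le> k"
    have r: "tt 2 k = (1-2*q^(k+1)+q^3*(q^(k+1))^2) - q*(q^(k+1))^2*(1-q)^2 / tt 1 (k+1)"
      using tt_rec[OF k, of 1] by (simp add: numeral_2_eq_2 numeral_3_eq_3)
    have "q*(q^(k+1))^2*(1-q)^2 / tt 1 (k+1) \<ge> 0" using tt_pos[of "k+1" 1] k q0 by simp
    moreover have "q^3*(q^(k+1))^2 \<le> q*(q^(k+1))^2"
      using q0 q1 by (intro mult_right_mono) (auto simp: power3_eq_cube mult_le_cancel_left1 mult_le_one)
    ultimately show "tt (Suc 0 + 1) k \<le> tt (Suc 0) k" using r tt_1[OF k] by (simp add: numeral_2_eq_2)
  qed
next
  case (Suc m)
  show ?case
  proof (intro allI impI)
    fix k assume k: "K \<le> k"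
    let ?n = "Suc m"
    have k1: "K \<le> k+1" using k by simp
    have r1: "tt (?n+1+1) k = (1-2*q^(k+1)+q^(2*(?n+1)+1)*(q^(k+1))^2) - q*(q^(k+1))^2*(1-q^(?n+1))^2 / tt (?n+1) (k+1)"
      using tt_rec[OF k, of "?n+1"] by simp
    have r2: "tt (?n+1) k = (1-2*q^(k+1)+q^(2*?n+1)*(q^(k+1))^2) - q*(q^(k+1))^2*(1-q^?n)^2 / tt ?n (k+1)"
      using tt_rec[OF k, of "?n"] by simp
    have a: "q^(2*(?n+1)+1) \<le> q^(2*?n+1)" using q0 q1 by (intro power_decreasing) auto
    have b: "(1-q^?n)^2 \<le> (1-q^(?n+1))^2"
    proof -
      have "q^(?n+1) \<le> q^?n" using q0 q1 by (intro power_decreasing) auto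
      moreover have "q^?n \<le> 1" using q0 q1 power_le_one[of q ?n] by linarith
      ultimately show ?thesis using pq_pos[of ?n] by (intro power_mono) auto
    qed
    have c: "0 < tt (?n+1) (k+1)" "tt (?n+1) (k+1) \<le> tt ?n (k+1)"
      using tt_pos[OF k1] Suc.IH k1 by auto
    have "(1-q^?n)^2 / tt ?n (k+1) \<le> (1-q^(?n+1))^2 / tt (?n+1) (k+1)"
      using b c by (intro frac_le) auto
    then have "q*(q^(k+1))^2*((1-q^?n)^2 / tt ?n (k+1)) \<le> q*(q^(k+1))^2*((1-q^(?n+1))^2 / tt (?n+1) (k+1))"
      using q0 by (intro mult_left_mono) auto
    moreover have "q^(2*(?n+1)+1)*(q^(k+1))^2 \<le> q^(2*?n+1)*(q^(k+1))^2" using a by (intro mult_right_mono) auto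
    ultimately show "tt (Suc (Suc m) + 1) k \<le> tt (Suc (Suc m)) k" using r1 r2 by simp
  qed
qed

lemma tt_le1: "K \<le> k \<Longrightarrow> tt (Suc m) k \<le> 1"
proof (induction m)
  case 0
  have "q*(q^(k+1))^2 \<le> 2*q^(k+1)"
  proof -
    have "q*(q^(k+1))^2 = (q*q^(k+1)) * q^(k+1)" by (simp add: power2_eq_square)
    also have "\<dots> \<le> 1 * q^(k+1)" using q0 q1 by (intro mult_right_mono) (auto simp: mult_le_one power_le_one)
    finally have h1: "q*(q^(k+1))^2 \<le> 1 * q^(k+1)" .
    have h2: "0 < q^(k+1)" using q0 by simp
    show ?thesis using h1 h2 by linarith
  qed
  then show ?case using tt_1[OF 0] by simp
next
  case (Suc m)
  then show ?case using tt_mono[of m] by fastforce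
qed

lemma ratio: "\<forall>k\<ge>K. S (Suc m) (k+1) * tt (Suc m) k \<le> S (Suc m) k"
proof (induction m)
  case 0
  show ?case
  proof (intro allI impI)
    fix k assume k: "K \<le> k"
    have e: "\<And>j. S 1 j = tt 1 j / (1-q)" unfolding tt_def using S0 q1 by simp
    have "tt 1 (k+1) \<le> 1" using tt_le1[of "k+1" 0] k by simp
    moreover have "tt 1 k > 0" using tt_pos k by simp
    ultimately have "tt 1 (k+1) * tt 1 k \<le> tt 1 k" by (simp add: mult_le_cancel_right1)
    then have "tt 1 (k+1) * tt 1 k / (1-q) \<le> tt 1 k / (1-q)" using q1 by (intro divide_right_mono) auto
    moreover have "S 1 (k+1) * tt 1 k = tt 1 (k+1) * tt 1 k / (1-q)" using e by simp
    moreover have "S 1 k = tt 1 k / (1-q)" using e by simp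
    ultimately show "S (Suc 0) (k+1) * tt (Suc 0) k \<le> S (Suc 0) k" by simp
  qed
next
  case (Suc m)
  show ?case
  proof (intro allI impI)
    fix k assume k: "K \<le> k"
    let ?n = "Suc m"
    have k1: "K \<le> k+1" using k by simp
    have pn: "1 - q^(?n+1) > 0" using pq_pos[of "?n+1"] by simp
    have e: "S (?n+1) j = tt (?n+1) j * S ?n (j+1) / (1-q^(?n+1))" if "K \<le> j" for j
    proof -
      have "S ?n (j+1) > 0" using Spos that by simp
      then show ?thesis unfolding tt_def using pn by simp
    qed
    have A: "S ?n (k+2) * tt ?n (k+1) \<le> S ?n (k+1)" using Suc.IH k1 by (simp add: numeral_2_eq_2)
    have B: "tt (?n+1) (k+1) \<le> tt ?n (k+1)" using tt_mono[of m] k1 by simp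
    have "tt (?n+1) (k+1) * S ?n (k+2) \<le> tt ?n (k+1) * S ?n (k+2)"
      using B Spos[of "k+2" ?n] k by (intro mult_right_mono) auto
    also have "\<dots> = S ?n (k+2) * tt ?n (k+1)" by (simp add: mult.commute)
    also have "\<dots> \<le> S ?n (k+1)" using A .
    finally have "tt (?n+1) (k+1) * S ?n (k+2) \<le> S ?n (k+1)" .
    then have "tt (?n+1) (k+1) * S ?n (k+2) * tt (?n+1) k \<le> S ?n (k+1) * tt (?n+1) k"
      using tt_pos[OF k, of "?n+1"] by (intro mult_right_mono) auto
    then have "tt (?n+1) (k+1) * S ?n (k+2) * tt (?n+1) k / (1-q^(?n+1)) \<le> S ?n (k+1) * tt (?n+1) k / (1-q^(?n+1))"
      using pn by (intro divide_right_mono) auto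
    moreover have "S (?n+1) (k+1) = tt (?n+1) (k+1) * S ?n (k+2) / (1-q^(?n+1))"
      using e[OF k1] by (simp add: numeral_2_eq_2)
    moreover have "S (?n+1) k = tt (?n+1) k * S ?n (k+1) / (1-q^(?n+1))" using e[OF k] by simp
    ultimately show "S (Suc ?n) (k+1) * tt (Suc ?n) k \<le> S (Suc ?n) k"
      by (simp only: Suc_eq_plus1 times_divide_eq_left) (simp add: ac_simps)
  qed
qed

lemma ratio4: "K \<le> k \<Longrightarrow> S n (k+1) < 4 * S n k"
proof (cases n)
  case 0
  then show ?thesis using S0 by simp
next
  case (Suc m)
  assume k: "K \<le> k"
  have r: "S (Suc m) (k+1) * tt (Suc m) k \<le> S (Suc m) k" using ratio k by blast
  have "2 * tt (m+1) k > 1 - 2*q^(k+1)" using tt_low k by blast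
  moreover have "4*q^(k+1) \<le> 1" using zK k by blast
  ultimately have "4 * tt (Suc m) k > 1" by simp
  moreover have "S (Suc m) (k+1) > 0" using Spos k by simp
  ultimately have "S (Suc m) (k+1) < S (Suc m) (k+1) * (4 * tt (Suc m) k)"
    by (simp add: mult_less_cancel_left1)
  then show ?thesis using r Suc by simp
qed

end

definition tri :: "nat \<Rightarrow> nat" where "tri k = k*(k+1) div 2"

lemma tri_Suc: "tri (Suc k) = tri k + Suc k"
proof -
  have "Suc k * (Suc k + 1) = k*(k+1) + 2*(k+1)" by (simp add: algebra_simps)
  then show ?thesis unfolding tri_def by simp
qed

lemma ac_sum:
  assumes q: "0 < q" "q < 1" and M: "M \<ge> 1"
  shows "lqa q M * (1 + q*q^M) + lqc q M * (1 + q^M) / q^M = 1 + q"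
proof -
  define A where "A = q^M"
  have Af: "0 < A" "A \<le> q" "q*A^2 < 1" using A_facts[OF q M] unfolding A_def by auto
  have d: "1 + q*A > 0" "1 + A > 0" "1 - q*A^2 > 0" using Af q by (simp_all add: add_pos_pos)
  have "lqa q M * (1 + q*q^M) + lqc q M * (1 + q^M) / q^M
     = A*((1+q)*(1-q*A))/((1-q*A^2)*(1+q*A)) * (1+q*A) + A*((1+q)*(1-A))/((1-q*A^2)*(1+A)) * (1+A) / A"
    unfolding lqa_form[OF M] lqc_form[OF M] A_def by simp
  also have "\<dots> = (1+q)*(A*(1-q*A) + (1-A))/(1-q*A^2)"
  proof -
    define D where "D = 1 - q*A^2"
    have Dn: "D \<noteq> 0" "1 + q*A \<noteq> 0" "1 + A \<noteq> 0" "A \<noteq> 0" using d Af unfolding D_def by auto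
    have h1: "A*((1+q)*(1-q*A))/(D*(1+q*A)) * (1+q*A) = A*((1+q)*(1-q*A))/D" using Dn by simp
    have h2: "A*((1+q)*(1-A))/(D*(1+A)) * (1+A) / A = ((1+q)*(1-A))/D" using Dn by simp
    have "A*((1+q)*(1-q*A))/(D*(1+q*A)) * (1+q*A) + A*((1+q)*(1-A))/(D*(1+A)) * (1+A) / A
       = (1+q)*(A*(1-q*A) + (1-A))/D" unfolding h1 h2 by (simp add: add_divide_distrib[symmetric] algebra_simps)
    then show ?thesis unfolding D_def .
  qed
  also have "A*(1-q*A) + (1-A) = 1 - q*A^2" by (simp add: algebra_simps power2_eq_square)
  finally show ?thesis using d by simp
qed

lemma at0: assumes q: "0 < q" "q < 1"
  shows "lqL_pair q 0 m = ((-1)^m * q^(tri m), (-1)^(m+1) * q^(tri (m+1)))"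
proof (induction m)
  case 0
  show ?case using q by (simp add: tri_def lqa_def lqb_def field_simps)
next
  case (Suc m)
  define M where "M = Suc m"
  define s where "s = ((-1::real)^m)"
  define Q where "Q = q^(tri m)"
  define A where "A = q^M"
  have R1: "(0 - lqb q 0) / lqa q 0 = -q" using q by (simp add: lqa_def lqb_def field_simps)
  have b: "lqb q M = 1 - lqa q M - lqc q M" unfolding M_def by (simp add: lqb_def)
  have ap: "lqa q M > 0" using lqa_pos q by blast
  have M1: "M \<ge> 1" unfolding M_def by simp
  have id: "lqa q M * (1 + q*A) + lqc q M * (1 + A) / A = 1 + q" unfolding A_def using ac_sum[OF q M1] .
  have Ap: "A > 0" unfolding A_def using q by simp
  have t1: "q^(tri (m+1)) = Q * A" unfolding Q_def A_def M_def by (simp add: tri_Suc power_add)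
  have t2: "q^(tri (Suc m+1)) = Q * A * A * q" unfolding Q_def A_def M_def by (simp add: tri_Suc power_add)
  have new: "((-q - lqb q M) * ((-1)^(m+1) * (Q*A)) - lqc q M * (s * Q)) / lqa q M = (-1)^(Suc m+1) * (Q*A*A*q)"
  proof -
    have "(q + lqb q M) * A - lqc q M = lqa q M * A^2 * q"
    proof -
      have "lqa q M * (1 + q*A) * A + lqc q M * (1 + A) = (1 + q) * A"
        using id Ap by (simp add: field_simps)
      then show ?thesis unfolding b by (simp add: algebra_simps power2_eq_square)
    qed
    then have num: "(-q - lqb q M) * (-(s*(Q*A))) - lqc q M * (s * Q) = lqa q M * (s*(Q*A*A*q))"
    proof -
      assume e: "(q + lqb q M) * A - lqc q M = lqa q M * A^2 * q"
      have "(-q - lqb q M) * (-(s*(Q*A))) - lqc q M * (s * Q) = s*Q*((q + lqb q M) * A - lqc q M)"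
        by (simp add: algebra_simps)
      also have "\<dots> = s*Q*(lqa q M * A^2 * q)" using e by simp
      also have "\<dots> = lqa q M * (s*(Q*A*A*q))" by (simp add: algebra_simps power2_eq_square)
      finally show ?thesis .
    qed
    have sg: "(-1::real)^(m+1) = -s" "(-1::real)^(Suc m+1) = s" unfolding s_def by simp_all
    show ?thesis unfolding sg using num ap by simp
  qed
  show ?case using Suc.IH R1 new t1 t2 unfolding s_def Q_def M_def by (simp add: Let_def)
qed

lemma alpha_P: "0 < q \<Longrightarrow> q < 1 \<Longrightarrow> littleqLegendre q m (1 - q^n) = P q m (q*q^n)"
  using littleqLegendre_P by simp

lemma dual:
  assumes q: "0 < q" "q < 1"
  shows "(1-q^(n+1)) * littleqLegendre q m (1 - q^(n+1))
       = (2 - mu q m * q^n) * littleqLegendre q m (1 - q^n) - (1-q^n) * P q m (q^n)"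
proof -
  have f: "P q m (q^n) - 2 * P q m (q*q^n) + P q m (q^2*q^n)
       = q^n * (P q m (q^n) - mu q m * P q m (q*q^n) + q * P q m (q^2*q^n))" by (rule P_func[OF q])
  have e: "q*q^(n+1) = q^2*q^n" by (simp add: power2_eq_square)
  show ?thesis unfolding alpha_P[OF q] e using f by (simp add: algebra_simps power2_eq_square)
qed

lemma mu_z: "0 < q \<Longrightarrow> mu q (n+k+1) * q^n * q^(k+1) = 1 + q^(2*n+1)*(q^(k+1))^2"
proof -
  assume q: "0 < q"
  have "mu q (n+k+1) * q^n * q^(k+1) = (1/q^(n+k+1) + q^(n+k+1+1)) * q^(n+k+1)"
    unfolding mu_def by (simp add: power_add)
  also have "\<dots> = 1 + q^(n+k+1+1)*q^(n+k+1)" using q by (simp add: field_simps)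
  also have "q^(n+k+1+1)*q^(n+k+1) = q^(2*n+1)*(q^(k+1))^2"
  proof -
    have ex: "n+k+1+1+(n+k+1) = (2*n+1) + (k+1)*2" by simp
    have "q^(n+k+1+1)*q^(n+k+1) = q^(n+k+1+1+(n+k+1))" by (simp only: power_add)
    also have "\<dots> = q^((2*n+1) + (k+1)*2)" unfolding ex ..
    also have "\<dots> = q^(2*n+1)*(q^(k+1))^2" by (simp only: power_add power_mult)
    finally show ?thesis .
  qed
  finally show ?thesis .
qed

lemma Srec_alg:
  fixes s Q S1 S2 S3 a b mz c z :: real
  assumes h: "a*(s*Q*S1) = (2-mz)*(-(s*Q*z*S2)) - b*(s*Q*(q*z^2)*S3)"
    and s: "s*s = 1" and Q: "Q \<noteq> 0" and m: "mz*z = 1 + c*z^2"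
  shows "a*S1 = (1-2*z+c*z^2)*S2 - b*q*z^2*S3"
proof -
  have "s*Q*(a*S1) = s*Q*((1-2*z+c*z^2)*S2 - b*q*z^2*S3)"
  proof -
    have "s*Q*(a*S1) = a*(s*Q*S1)" by (simp add: algebra_simps)
    also have "\<dots> = (2-mz)*(-(s*Q*z*S2)) - b*(s*Q*(q*z^2)*S3)" by (rule h)
    also have "\<dots> = s*Q*((mz*z - 2*z)*S2 - b*q*z^2*S3)" by (simp add: algebra_simps)
    also have "\<dots> = s*Q*((1-2*z+c*z^2)*S2 - b*q*z^2*S3)" unfolding m by (simp add: algebra_simps)
    finally show ?thesis .
  qed
  moreover have "s \<noteq> 0" using s by auto
  ultimately show ?thesis using Q by simp
qed

context
  fixes q :: real
  assumes q0: "0 < q" and q1: "q < 1"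
begin

definition SS :: "nat \<Rightarrow> nat \<Rightarrow> real" where
  "SS n k = (-1)^k * littleqLegendre q (n+k) (1 - q^n) / q^(tri k)"

lemma alpha_SS: "littleqLegendre q (n+k) (1 - q^n) = (-1)^k * q^(tri k) * SS n k"
proof -
  have "((-1::real)^k)*((-1)^k) = 1" by (simp add: power_mult_distrib[symmetric])
  then show ?thesis unfolding SS_def using q0 by (simp add: field_simps)
qed

lemma SS0: "SS 0 k = 1"
proof -
  have "littleqLegendre q k (1 - q^0) = (-1)^k * q^(tri k)"
    using at0[OF q0 q1, of k] unfolding littleqLegendre_def by simp
  then show ?thesis unfolding SS_def using q0 by (simp add: power_mult_distrib[symmetric])
qed

lemma SSrec: "(1-q^(n+1)) * SS (n+1) k = (1-2*q^(k+1)+q^(2*n+1)*(q^(k+1))^2) * SS n (k+1)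
                        - (1-q^n) * q * (q^(k+1))^2 * SS (n-1) (k+2)"
proof -
  define m where "m = n+k+1"
  define s where "s = ((-1::real)^k)"
  define Q where "Q = q^(tri k)"
  define z where "z = q^(k+1)"
  have d: "(1-q^(n+1)) * littleqLegendre q m (1 - q^(n+1))
       = (2 - mu q m * q^n) * littleqLegendre q m (1 - q^n) - (1-q^n) * P q m (q^n)"
    by (rule dual[OF q0 q1])
  have a1: "littleqLegendre q m (1 - q^(n+1)) = s*Q*SS (n+1) k"
    using alpha_SS[of "n+1" k] unfolding m_def s_def Q_def by simp
  have a2: "littleqLegendre q m (1 - q^n) = -(s*Q*z*SS n (k+1))"
    using alpha_SS[of n "k+1"] unfolding m_def s_def Q_def z_def by (simp add: tri_Suc power_add)
  have a3: "(1-q^n) * P q m (q^n) = (1-q^n) * (s*Q*(q*z^2)*SS (n-1) (k+2))"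
  proof (cases n)
    case 0 then show ?thesis by simp
  next
    case (Suc n')
    have "P q m (q^n) = littleqLegendre q (n' + (k+2)) (1 - q^n')"
      using alpha_P[OF q0 q1] unfolding m_def Suc by simp
    also have "\<dots> = s*Q*(q*z^2)*SS n' (k+2)"
      unfolding alpha_SS s_def Q_def z_def numeral_2_eq_2
      by (simp add: tri_Suc power_add power2_eq_square)
    finally show ?thesis using Suc by simp
  qed
  have mz: "(mu q m * q^n) * z = 1 + q^(2*n+1)*z^2" unfolding m_def z_def using mu_z q0 by simp
  have "(1-q^(n+1)) * (s*Q*SS (n+1) k) = (2 - mu q m * q^n)*(-(s*Q*z*SS n (k+1))) - (1-q^n)*(s*Q*(q*z^2)*SS (n-1) (k+2))"
    using d unfolding a1 a2 a3 .
  from Srec_alg[OF this _ _ mz] show ?thesis unfolding s_def Q_def z_def using q0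
    by (simp add: power_mult_distrib[symmetric] mult.assoc)
qed

end

lemma mu_strict: assumes q: "0 < q" "q < 1" shows "mu q m < mu q (Suc m)"
proof -
  define X where "X = q^(Suc m)"
  have X: "0 < X" "X < 1" unfolding X_def using q power_Suc_less_one by auto
  have "mu q (Suc m) - mu q m = (1-q) * (1/X - X)"
    unfolding mu_def X_def using q by (simp add: field_simps)
  moreover have "1/X > 1" using X by (simp add: field_simps)
  then have "1/X - X > 0" using X by linarith
  ultimately have "mu q (Suc m) - mu q m > 0" using q by simp
  then show ?thesis by simp
qed

lemma mu_inj: assumes q: "0 < q" "q < 1" and "m \<noteq> l" shows "mu q m \<noteq> mu q l"
proof -
  have sm: "strict_mono (mu q)" using mu_strict[OF q] strict_mono_Suc_iff by blast
  show ?thesis using strict_mono_eq[OF sm] assms(3) by simp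
qed

context
  fixes q :: real
  assumes q0: "0 < q" and q1: "q < 1"
begin

definition ff :: "nat \<Rightarrow> nat \<Rightarrow> real" where "ff j m = littleqLegendre q m (1 - q^j)"

lemma ff_P: "ff j m = P q m (q*q^j)" unfolding ff_def using alpha_P[OF q0 q1] .

lemma ff_lim: "(\<lambda>j. ff j m) \<longlonglongrightarrow> 1"
proof -
  have z: "(\<lambda>j. q*q^j) \<longlonglongrightarrow> 0"
    using LIMSEQ_power_zero[of q] q0 q1 tendsto_mult_right_zero[of "\<lambda>j. q^j" sequentially q] by simp
  have "(\<lambda>j. \<Sum>i\<le>m. Cf q m i * (q*q^j)^i) \<longlonglongrightarrow> (\<Sum>i\<le>m. Cf q m i * 0^i)"
    by (intro tendsto_sum tendsto_mult tendsto_const tendsto_power z)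
  moreover have "(\<Sum>i\<le>m. Cf q m i * (0::real)^i) = 1"
  proof -
    have "(\<Sum>i\<le>m. Cf q m i * (0::real)^i) = (\<Sum>i\<in>{0}. Cf q m i * (0::real)^i)"
      by (intro sum.mono_neutral_right) auto
    then show ?thesis by simp
  qed
  ultimately show ?thesis unfolding ff_P P_def by simp
qed

lemma ff_bdd: "\<exists>B>0. \<forall>j. \<bar>ff j m\<bar> \<le> B"
proof -
  have "Bseq (\<lambda>j. ff j m)" using ff_lim convergent_imp_Bseq convergentI by blast
  then show ?thesis unfolding Bseq_def by auto
qed

lemma ff_summable: "summable (\<lambda>j. q^j * (ff j m * ff j l))"
proof -
  obtain B1 where B1: "B1 > 0" "\<And>j. \<bar>ff j m\<bar> \<le> B1" using ff_bdd by blast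
  obtain B2 where B2: "B2 > 0" "\<And>j. \<bar>ff j l\<bar> \<le> B2" using ff_bdd by blast
  have g: "summable (\<lambda>j. (B1*B2) * q^j)"
  proof (rule summable_mult)
    show "summable (\<lambda>j. q^j)" using q0 q1 by (intro summable_geometric) simp
  qed
  have bd: "norm (q^j * (ff j m * ff j l)) \<le> (B1*B2) * q^j" for j
  proof -
    have "\<bar>ff j m\<bar> * \<bar>ff j l\<bar> \<le> B1*B2" using B1 B2 by (intro mult_mono) auto
    moreover have "norm (q^j * (ff j m * ff j l)) = q^j * (\<bar>ff j m\<bar> * \<bar>ff j l\<bar>)"
      using q0 by (simp add: abs_mult)
    ultimately show ?thesis using q0 by (simp add: mult.commute mult_left_mono)
  qed
  show ?thesis by (rule summable_comparison_test'[OF g bd])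
qed

lemma ff_dual: "(1-q^(N+1)) * ff (N+1) m = (2 - mu q m * q^N) * ff N m - (1-q^N) * ff (N-1) m"
proof (cases N)
  case 0 then show ?thesis unfolding ff_def using dual[OF q0 q1, of 0 m] by simp
next
  case (Suc N')
  have "P q m (q^N) = ff N' m" unfolding ff_P Suc by simp
  then show ?thesis unfolding ff_def using dual[OF q0 q1, of N m] Suc by simp
qed

lemma green: "(1-q^(N+1)) * (ff (N+1) m * ff N l - ff N m * ff (N+1) l)
            = (mu q l - mu q m) * (\<Sum>j\<le>N. q^j * (ff j m * ff j l))"
proof (induction N)
  case 0
  have h1: "(1-q) * ff 1 m = (2 - mu q m) * ff 0 m" using ff_dual[of 0 m] by simp
  have h2: "(1-q) * ff 1 l = (2 - mu q l) * ff 0 l" using ff_dual[of 0 l] by simp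
  have "(1-q^(0+1)) * (ff (0+1) m * ff 0 l - ff 0 m * ff (0+1) l) = ((1-q) * ff 1 m) * ff 0 l - ff 0 m * ((1-q) * ff 1 l)"
    by (simp add: algebra_simps)
  also have "\<dots> = (mu q l - mu q m) * (ff 0 m * ff 0 l)" unfolding h1 h2 by (simp add: algebra_simps)
  finally show ?case by simp
next
  case (Suc N)
  have d1: "(1-q^(N+2)) * ff (N+2) m = (2 - mu q m * q^(N+1)) * ff (N+1) m - (1-q^(N+1)) * ff N m"
    using ff_dual[of "N+1" m] by (simp add: numeral_2_eq_2)
  have d2: "(1-q^(N+2)) * ff (N+2) l = (2 - mu q l * q^(N+1)) * ff (N+1) l - (1-q^(N+1)) * ff N l"
    using ff_dual[of "N+1" l] by (simp add: numeral_2_eq_2)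
  have "(1-q^(Suc N+1)) * (ff (Suc N+1) m * ff (Suc N) l - ff (Suc N) m * ff (Suc N+1) l)
      = ((1-q^(N+2)) * ff (N+2) m) * ff (N+1) l - ff (N+1) m * ((1-q^(N+2)) * ff (N+2) l)"
    by (simp add: algebra_simps numeral_2_eq_2)
  also have "\<dots> = (mu q l - mu q m) * (q^(N+1) * (ff (N+1) m * ff (N+1) l))
       + (1-q^(N+1)) * (ff (N+1) m * ff N l - ff N m * ff (N+1) l)"
    unfolding d1 d2 by (simp add: algebra_simps)
  also have "\<dots> = (mu q l - mu q m) * (\<Sum>j\<le>Suc N. q^j * (ff j m * ff j l))"
    unfolding Suc.IH by (simp add: algebra_simps)
  finally show ?case .
qed

lemma orth: assumes "m \<noteq> l" shows "(\<lambda>j. q^j * (ff j m * ff j l)) sums 0"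
proof -
  have d: "mu q l - mu q m \<noteq> 0" using mu_inj[OF q0 q1 assms] by simp
  have lim: "(\<lambda>N. (1-q^(N+1)) * (ff (N+1) m * ff N l - ff N m * ff (N+1) l)) \<longlonglongrightarrow> 1 * (1*1 - 1*1)"
  proof -
    have a: "(\<lambda>N. ff (Suc N) m) \<longlonglongrightarrow> 1" "(\<lambda>N. ff (Suc N) l) \<longlonglongrightarrow> 1"
      using LIMSEQ_Suc[OF ff_lim[of m]] LIMSEQ_Suc[OF ff_lim[of l]] by auto
    have b: "(\<lambda>N. 1 - q^(N+1)) \<longlonglongrightarrow> 1 - 0"
      using LIMSEQ_power_zero[of q] q0 q1 LIMSEQ_Suc[of "\<lambda>N. q^N" 0] by (intro tendsto_diff) auto
    show ?thesis using a b ff_lim[of m] ff_lim[of l] by (intro tendsto_intros) auto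
  qed
  have "(\<lambda>N. (\<Sum>j\<le>N. q^j * (ff j m * ff j l))) \<longlonglongrightarrow> 0"
  proof -
    have "(\<lambda>N. (1-q^(N+1)) * (ff (N+1) m * ff N l - ff N m * ff (N+1) l) / (mu q l - mu q m)) \<longlonglongrightarrow> 0 / (mu q l - mu q m)"
      using lim by (intro tendsto_divide tendsto_const d) auto
    then show ?thesis unfolding green using d by simp
  qed
  then have "(\<lambda>N. (\<Sum>j<Suc N. q^j * (ff j m * ff j l))) \<longlonglongrightarrow> 0" by (simp add: lessThan_Suc_atMost)
  then have "(\<lambda>N. (\<Sum>j<N. q^j * (ff j m * ff j l))) \<longlonglongrightarrow> 0" by (rule LIMSEQ_imp_Suc)
  then show ?thesis unfolding sums_def .
qed

end

lemma ratio_gen: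
  fixes q A X Y D1 D3 :: real
  assumes "X \<noteq> 0" "Y \<noteq> 0" "D1 \<noteq> 0" "D3 \<noteq> 0" "A \<noteq> 0"
  shows "(q*A*X/(D3*Y)) * (A/D1) / (A*X/(D1*Y)) = q*A/D3"
  using assms by (simp add: field_simps)

lemma ca_ratio:
  assumes q: "0 < q" "q < 1" and m: "m \<ge> 1"
  shows "lqc q (m+1) * (q^m/(1-q^(2*m+1))) / lqa q m = q^(m+1)/(1-q^(2*m+3))"
proof -
  define A where "A = q^m"
  have p: "q^(m+1) < 1" "q^(2*m+1) < 1" "q^(2*m+3) < 1"
    using power_Suc_less_one[OF q, of m] power_Suc_less_one[OF q, of "2*m"] power_Suc_less_one[OF q, of "2*m+2"]
    by (simp_all add: numeral_3_eq_3)
  have Ap: "A > 0" unfolding A_def using q by simp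
  have e1: "q^(m+1) = q*A" unfolding A_def by simp
  have e0: "q^(2*m) = A^2" unfolding A_def by (metis power_mult mult.commute)
  have e2: "q^(2*m+1) = q*A^2" using e0 by (simp only: power_add power_one_right mult.commute)
  have e3: "q^(2*m+3) = q^3*A^2" using e0 by (simp only: power_add mult.commute)
  have e4: "q^(2*(m+1)+1) = q^(2*m+3)" by (simp add: algebra_simps numeral_3_eq_3)
  have a: "lqa q m = A*((1+q)*(1-q*A))/((1-q*A^2)*(1+q*A))" using m unfolding lqa_def e1 e2 A_def by simp
  have c: "lqc q (m+1) = q*A*((1+q)*(1-q*A))/((1-q^3*A^2)*(1+q*A))"
    unfolding lqc_def e4 e3 e1 by simp
  have qa: "q*A > 0" using q Ap by simp
  have nz: "(1+q)*(1-q*A) \<noteq> 0" "1+q*A \<noteq> 0" "1-q*A^2 \<noteq> 0" "1-q^3*A^2 \<noteq> 0" "A \<noteq> 0"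
  proof -
    show "(1+q)*(1-q*A) \<noteq> 0" using p(1) q unfolding e1 by simp
    show "1+q*A \<noteq> 0" using qa by linarith
    show "1-q*A^2 \<noteq> 0" using p(2) unfolding e2 by simp
    show "1-q^3*A^2 \<noteq> 0" using p(3) unfolding e3 by simp
    show "A \<noteq> 0" using Ap by simp
  qed
  show ?thesis unfolding a c e1 e2 e3 A_def[symmetric] using ratio_gen[OF nz] by simp
qed

lemma c1_val: "0 < q \<Longrightarrow> q < 1 \<Longrightarrow> lqc q 1 * (1/(1-q)) = q/(1-q^3)"
proof -
  assume q: "0 < q" "q < 1"
  have "q^3 < 1" using q power_Suc_less_one[of q 2] by (simp add: numeral_3_eq_3)
  define D where "D = 1 - q^3"
  have nz: "D \<noteq> 0" "1 + q \<noteq> 0" "1 - q \<noteq> 0" using q \<open>q^3 < 1\<close> unfolding D_def by auto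
  have "lqc q 1 = q*((1+q)*(1-q))/(D*(1+q))" unfolding lqc_def D_def by (simp add: numeral_3_eq_3)
  also have "\<dots> = (q*(1-q))/D" using nz(2) by (simp add: ac_simps)
  finally have "lqc q 1 * (1/(1-q)) = (q*(1-q))/D * (1/(1-q))" by simp
  also have "\<dots> = q/D" using nz by simp
  finally show ?thesis unfolding D_def .
qed

context
  fixes q :: real
  assumes q0: "0 < q" and q1: "q < 1"
begin

definition NN :: "nat \<Rightarrow> real" where "NN m = suminf (\<lambda>j. q^j * (ff q j m * ff q j m))"

lemma ff_sums: "(\<lambda>j. q^j * (ff q j m * ff q j l)) sums (if m = l then NN m else 0)"
proof (cases "m = l")
  case True
  then show ?thesis unfolding NN_def using ff_summable[OF q0 q1, of m m] by (simp add: summable_sums)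
next
  case False
  then show ?thesis using orth[OF q0 q1 False] by simp
qed

lemma ff_0: "ff q j 0 = 1" unfolding ff_P[OF q0 q1] by simp

lemma ff_1: "ff q j 1 = 1 - (1+q)*q^j" unfolding ff_P[OF q0 q1] P_1[OF q0 q1] using q0 by simp

lemma ff_1': "ff q j (Suc 0) = 1 - (1+q)*q^j" using ff_1 by simp

lemma ff_three: assumes m: "m \<ge> 1"
  shows "(1 - (1+q)*q^j) * ff q j m = lqa q m * ff q j (m+1) + lqb q m * ff q j m + lqc q m * ff q j (m-1)"
proof -
  have r: "lqa q m * P q (m+1) (q*q^j) = (lqa q m + lqc q m) * P q m (q*q^j) - lqc q m * P q (m-1) (q*q^j)
           - (1+q)/q * (q*q^j) * P q m (q*q^j)" by (rule P_rec[OF q0 q1 m])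
  have b: "lqb q m = 1 - lqa q m - lqc q m" using m by (simp add: lqb_def)
  have "(1+q)/q * (q*q^j) = (1+q)*q^j" using q0 by simp
  then show ?thesis unfolding ff_P[OF q0 q1] b using r by (simp add: algebra_simps)
qed

lemma NN_rec: "(if m = 0 then 1 else lqa q m) * NN (m+1) = lqc q (m+1) * NN m"
proof -
  define g where "g j = q^j * ((1 - (1+q)*q^j) * ff q j m * ff q j (m+1))" for j
  have s1: "g sums ((if m = 0 then 1 else lqa q m) * NN (m+1))"
  proof (cases "m = 0")
    case True
    have "g = (\<lambda>j. q^j * (ff q j 1 * ff q j 1))" unfolding g_def True by (auto simp: ff_0 ff_1' fun_eq_iff)
    then show ?thesis using ff_sums[of 1 1] True by simp
  next
    case False
    then have m1: "m \<ge> 1" by simp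
    have "g = (\<lambda>j. lqa q m * (q^j * (ff q j (m+1) * ff q j (m+1))) + lqb q m * (q^j * (ff q j m * ff q j (m+1)))
               + lqc q m * (q^j * (ff q j (m-1) * ff q j (m+1))))"
    proof (rule ext)
      fix j
      have e: "(1 - (1+q)*q^j) * ff q j m = lqa q m * ff q j (m+1) + lqb q m * ff q j m + lqc q m * ff q j (m-1)"
        by (rule ff_three[OF m1])
      have "g j = q^j * (((1 - (1+q)*q^j) * ff q j m) * ff q j (m+1))" unfolding g_def by (simp only: mult.assoc)
      also have "\<dots> = q^j * ((lqa q m * ff q j (m+1) + lqb q m * ff q j m + lqc q m * ff q j (m-1)) * ff q j (m+1))"
        unfolding e ..
      also have "\<dots> = lqa q m * (q^j * (ff q j (m+1) * ff q j (m+1))) + lqb q m * (q^j * (ff q j m * ff q j (m+1)))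
               + lqc q m * (q^j * (ff q j (m-1) * ff q j (m+1)))" by (simp add: algebra_simps)
      finally show "g j = \<dots>" .
    qed
    moreover have "(\<lambda>j. lqa q m * (q^j * (ff q j (m+1) * ff q j (m+1))) + lqb q m * (q^j * (ff q j m * ff q j (m+1)))
               + lqc q m * (q^j * (ff q j (m-1) * ff q j (m+1)))) sums (lqa q m * NN (m+1) + lqb q m * 0 + lqc q m * 0)"
    proof -
      have t1: "(\<lambda>j. q^j*(ff q j (m+1) * ff q j (m+1))) sums NN (m+1)" using ff_sums[of "m+1" "m+1"] by simp
      have t2: "(\<lambda>j. q^j*(ff q j m * ff q j (m+1))) sums 0" using ff_sums[of m "m+1"] by simp
      have ne: "m - 1 \<noteq> m + 1" by arith
      have t3: "(\<lambda>j. q^j*(ff q j (m-1) * ff q j (m+1))) sums 0" using ff_sums[of "m-1" "m+1"] by (simp only: ne if_False)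
      show ?thesis by (intro sums_add sums_mult t1 t2 t3)
    qed
    ultimately show ?thesis using False by simp
  qed
  have s2: "g sums (lqc q (m+1) * NN m)"
  proof -
    have m1: "m+1 \<ge> 1" by simp
    have "g = (\<lambda>j. lqa q (m+1) * (q^j * (ff q j m * ff q j (m+2))) + lqb q (m+1) * (q^j * (ff q j m * ff q j (m+1)))
               + lqc q (m+1) * (q^j * (ff q j m * ff q j m)))"
    proof (rule ext)
      fix j
      have e: "(1 - (1+q)*q^j) * ff q j (m+1) = lqa q (m+1) * ff q j (m+2) + lqb q (m+1) * ff q j (m+1) + lqc q (m+1) * ff q j m"
        using ff_three[OF m1, of j] by (simp add: numeral_2_eq_2)
      have "g j = q^j * (ff q j m * ((1 - (1+q)*q^j) * ff q j (m+1)))" unfolding g_def by (simp only: ac_simps)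
      also have "\<dots> = q^j * (ff q j m * (lqa q (m+1) * ff q j (m+2) + lqb q (m+1) * ff q j (m+1) + lqc q (m+1) * ff q j m))"
        unfolding e ..
      also have "\<dots> = lqa q (m+1) * (q^j * (ff q j m * ff q j (m+2))) + lqb q (m+1) * (q^j * (ff q j m * ff q j (m+1)))
               + lqc q (m+1) * (q^j * (ff q j m * ff q j m))" by (simp add: algebra_simps)
      finally show "g j = \<dots>" .
    qed
    moreover have "(\<lambda>j. lqa q (m+1) * (q^j * (ff q j m * ff q j (m+2))) + lqb q (m+1) * (q^j * (ff q j m * ff q j (m+1)))
               + lqc q (m+1) * (q^j * (ff q j m * ff q j m))) sums (lqa q (m+1) * 0 + lqb q (m+1) * 0 + lqc q (m+1) * NN m)"
    proof -
      have t1: "(\<lambda>j. q^j*(ff q j m * ff q j (m+2))) sums 0" using ff_sums[of m "m+2"] by simp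
      have t2: "(\<lambda>j. q^j*(ff q j m * ff q j (m+1))) sums 0" using ff_sums[of m "m+1"] by simp
      have t3: "(\<lambda>j. q^j*(ff q j m * ff q j m)) sums NN m" using ff_sums[of m m] by simp
      show ?thesis by (intro sums_add sums_mult t1 t2 t3)
    qed
    ultimately show ?thesis by simp
  qed
  show ?thesis using sums_unique2[OF s1 s2] .
qed

lemma NN0: "NN 0 = 1/(1-q)"
proof -
  have "(\<lambda>j. q^j * (ff q j 0 * ff q j 0)) sums (1/(1-q))" unfolding ff_0 using geometric_sums[of q] q0 q1 by simp
  then show ?thesis unfolding NN_def using sums_unique by (simp add: sums_iff)
qed

lemma NN_val: "NN m = q^m / (1 - q^(2*m+1))"
proof (induction m)
  case 0
  then show ?case using NN0 by simp
next
  case (Suc m)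
  show ?case
  proof (cases "m = 0")
    case True
    have "NN 1 = lqc q 1 * NN 0" using NN_rec[of 0] by simp
    also have "\<dots> = q/(1-q^3)" using NN0 c1_val[OF q0 q1] by simp
    finally show ?thesis using True by (simp add: numeral_3_eq_3)
  next
    case False
    have ap: "lqa q m > 0" using lqa_pos[OF q0 q1] by blast
    have "NN (m+1) = lqc q (m+1) * NN m / lqa q m" using NN_rec[of m] False ap by (simp add: field_simps)
    also have "\<dots> = q^(m+1)/(1-q^(2*m+3))" unfolding Suc.IH using ca_ratio[OF q0 q1] False by simp
    finally show ?thesis by (simp add: numeral_3_eq_3)
  qed
qed

end

context
  fixes q :: real
  assumes q0: "0 < q" and q1: "q < 1"
begin

lemma NN_pos: "NN q m > 0"
proof -
  have "q^(2*m+1) < 1" using power_Suc_less_one[OF q0 q1] by simp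
  then show ?thesis unfolding NN_val[OF q0 q1] using q0 by simp
qed

lemma christoffel: "(\<Sum>m\<le>M. (ff q n m)^2 / NN q m) \<le> 1 / q^n"
proof -
  define c where "c m = ff q n m / NN q m" for m
  define Kc where "Kc = (\<Sum>m\<le>M. (ff q n m)^2 / NN q m)"
  define \<pi> where "\<pi> j = (\<Sum>m\<le>M. c m * ff q j m)" for j
  have inner: "(\<lambda>j. \<Sum>l\<le>M. c m * c l * (q^j * (ff q j m * ff q j l))) sums (c m * c m * NN q m)" if "m \<le> M" for m
  proof -
    have "(\<lambda>j. \<Sum>l\<le>M. c m * c l * (q^j * (ff q j m * ff q j l))) sums (\<Sum>l\<le>M. c m * c l * (if m = l then NN q m else 0))"
      by (intro sums_sum sums_mult ff_sums[OF q0 q1])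
    also have "(\<Sum>l\<le>M. c m * c l * (if m = l then NN q m else 0)) = c m * c m * NN q m"
      using that by (simp add: if_distrib sum.delta cong: if_cong)
    finally show ?thesis .
  qed
  have tot: "(\<lambda>j. q^j * (\<pi> j)^2) sums (\<Sum>m\<le>M. c m * c m * NN q m)"
  proof -
    have "(\<lambda>j. \<Sum>m\<le>M. \<Sum>l\<le>M. c m * c l * (q^j * (ff q j m * ff q j l))) sums (\<Sum>m\<le>M. c m * c m * NN q m)"
      by (intro sums_sum inner) simp
    moreover have "(\<lambda>j. \<Sum>m\<le>M. \<Sum>l\<le>M. c m * c l * (q^j * (ff q j m * ff q j l))) = (\<lambda>j. q^j * (\<pi> j)^2)"
    proof (rule ext)
      fix j
      have "q^j * (\<pi> j)^2 = q^j * ((\<Sum>m\<le>M. c m * ff q j m) * (\<Sum>l\<le>M. c l * ff q j l))"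
        unfolding \<pi>_def by (simp add: power2_eq_square)
      also have "\<dots> = (\<Sum>m\<le>M. \<Sum>l\<le>M. c m * c l * (q^j * (ff q j m * ff q j l)))"
        by (simp add: sum_product sum_distrib_left algebra_simps)
      finally show "(\<Sum>m\<le>M. \<Sum>l\<le>M. c m * c l * (q^j * (ff q j m * ff q j l))) = q^j * (\<pi> j)^2" by simp
    qed
    ultimately show ?thesis by simp
  qed
  have KcE: "(\<Sum>m\<le>M. c m * c m * NN q m) = Kc"
    unfolding Kc_def c_def using NN_pos by (intro sum.cong) (auto simp: power2_eq_square)
  have piE: "\<pi> n = Kc" unfolding \<pi>_def Kc_def c_def by (intro sum.cong) (auto simp: power2_eq_square)
  have "q^n * (\<pi> n)^2 \<le> Kc"
  proof -
    have "sum (\<lambda>j. q^j * (\<pi> j)^2) {n} \<le> suminf (\<lambda>j. q^j * (\<pi> j)^2)"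
      using tot q0 by (intro sum_le_suminf) (auto simp: sums_summable)
    then show ?thesis using sums_unique[OF tot] KcE by simp
  qed
  then have a: "q^n * Kc * Kc \<le> Kc" unfolding piE by (simp add: power2_eq_square mult.assoc)
  have k1: "Kc \<ge> (ff q n 0)^2 / NN q 0"
    unfolding Kc_def using NN_pos by (intro member_le_sum) (auto intro!: divide_nonneg_pos)
  have k2: "(ff q n 0)^2 / NN q 0 > 0" using NN_pos[of 0] ff_0[OF q0 q1] by simp
  have kp: "Kc > 0" using k1 k2 by linarith
  have "q^n * Kc \<le> 1" using a kp by (simp add: mult_le_cancel_right1)
  then show ?thesis unfolding Kc_def[symmetric] using q0 by (simp add: field_simps)
qed

lemma ff_sq_bound: assumes M: "M \<ge> 1"
  shows "(ff q n M)^2 \<le> (1/q^n - (1-q)) * (q^M / (1 - q^(2*M+1)))"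
proof -
  have "(ff q n M)^2 / NN q M + (ff q n 0)^2 / NN q 0 = (\<Sum>m\<in>{0,M}. (ff q n m)^2 / NN q m)"
    using M by simp
  also have "\<dots> \<le> (\<Sum>m\<le>M. (ff q n m)^2 / NN q m)"
    using NN_pos by (intro sum_mono2) (auto intro!: divide_nonneg_pos)
  also have "\<dots> \<le> 1/q^n" by (rule christoffel)
  finally have "(ff q n M)^2 / NN q M \<le> 1/q^n - (1-q)"
    unfolding ff_0[OF q0 q1] NN0[OF q0 q1] using q1 by simp
  then have "(ff q n M)^2 \<le> (1/q^n - (1-q)) * NN q M" using NN_pos[of M] by (simp add: pos_divide_le_eq)
  then show ?thesis unfolding NN_val[OF q0 q1] .
qed

end

lemma final_ineq:
  fixes q :: real
  assumes q: "0 < q" "q < 1" and K4: "q^(K+1) \<le> 1/4" and M: "M = n + K"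
  shows "(1/q^n - (1-q)) * (q^M / (1 - q^(2*M+1))) \<le> 1"
proof -
  have qn: "q^n > 0" using q by simp
  have pM: "q^(2*M+1) < 1" using power_Suc_less_one[OF q] by simp
  have e: "(1/q^n - (1-q)) * q^M = q^K * (1 - (1-q)*q^n)"
    unfolding M using qn q by (simp add: field_simps power_add)
  have main: "q^K * (1 - (1-q)*q^n) \<le> 1 - q^(2*M+1)"
  proof (cases "K = 0")
    case True
    have "q \<le> 1/4" using K4 True by simp
    have "q^(n+1) \<le> q" using q power_decreasing[of 1 "n+1" q] by simp
    then have "q^(n+1) \<le> 1 - q" using \<open>q \<le> 1/4\<close> by linarith
    then have A: "q^n * q^(n+1) \<le> q^n * (1-q)" using qn by (intro mult_left_mono) auto
    have B: "q^(2*M+1) = q^n * q^(n+1)" unfolding M True by (simp add: power_add[symmetric] mult_2)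
    have f1: "q^(2*M+1) \<le> q^n*(1-q)" unfolding B using A .
    have f2: "q^n*(1-q) = (1-q)*q^n" by simp
    have g: "q^K * (1 - (1-q)*q^n) = 1 - (1-q)*q^n" using True by simp
    show ?thesis unfolding g using f1 f2 by linarith
  next
    case False
    have a: "q^K * (1 - (1-q)*q^n) \<le> q^K"
    proof -
      have "(1-q)*q^n \<ge> 0" using q by simp
      then show ?thesis using q by (simp add: mult_left_le)
    qed
    have b: "q^(2*M+1) \<le> q^(2*K+1)" unfolding M using q by (intro power_decreasing) auto
    have c: "q^(2*K+1) \<le> q^K / 4"
    proof -
      have "q^(2*K+1) = q^K * q^(K+1)" by (simp add: power_add[symmetric] mult_2)
      also have "\<dots> \<le> q^K * (1/4)" using K4 q by (intro mult_left_mono) auto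
      finally show ?thesis by simp
    qed
    have d: "q^K \<le> 4/5"
    proof (cases "q \<le> 4/5")
      case True
      have "q^K \<le> q^1" using q False power_decreasing[of 1 K q] by simp
      then show ?thesis using True by simp
    next
      case F: False
      have "q^K * q = q^(K+1)" by simp
      then have "q^K * q \<le> 1/4" using K4 by (simp add: mult.commute)
      moreover have "q^K * (4/5) \<le> q^K * q" using F q by (intro mult_left_mono) auto
      ultimately have "q^K * (4/5) \<le> 1/4" by linarith
      then show ?thesis by simp
    qed
    show ?thesis using a b c d by linarith
  qed
  have "(1/q^n - (1-q)) * (q^M / (1 - q^(2*M+1))) = q^K * (1 - (1-q)*q^n) / (1 - q^(2*M+1))"
    using e by (simp add: mult.assoc[symmetric])
  also have "\<dots> \<le> 1" using main pM by (simp add: divide_le_eq)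
  finally show ?thesis .
qed

lemma bound_gen:
  fixes q :: real
  assumes q: "0 < q" "q < 1" and K4: "q^(K+1) \<le> 1/4"
  shows "\<bar>littleqLegendre q (n+K) (1-q^n)\<bar> \<le> 1"
proof (cases "n + K = 0")
  case True
  then show ?thesis by (simp add: littleqLegendre_def)
next
  case False
  then have M: "n + K \<ge> 1" by arith
  have "(ff q n (n+K))^2 \<le> 1" using ff_sq_bound[OF q M, of n] final_ineq[OF q K4, of "n+K" n] by simp
  then have "\<bar>ff q n (n+K)\<bar> \<le> 1" by (simp add: abs_square_le_1)
  moreover have "ff q n (n+K) = littleqLegendre q (n+K) (1-q^n)" using ff_def[OF q] by simp
  ultimately show ?thesis by simp
qed

lemma K4_lemma:
  fixes q :: real assumes q: "0 < q" "q < 1"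
  shows "q ^ (nat \<lceil>ln 4 / ln (1 / q) - 1\<rceil> + 1) \<le> 1/4"
proof -
  define K where "K = nat \<lceil>ln 4 / ln (1 / q) - 1\<rceil>"
  have lq: "ln (1/q) > 0" using q by simp
  have "real K \<ge> ln 4 / ln (1 / q) - 1" unfolding K_def by (rule real_nat_ceiling_ge)
  then have "(real K + 1) * ln (1/q) \<ge> ln 4" using lq by (simp add: field_simps)
  moreover have "ln (q^(K+1)) = - ((real K + 1) * ln (1/q))"
  proof -
    have "ln (q^(K+1)) = real (K+1) * ln q" by (rule ln_realpow)
    then show ?thesis using q by (simp add: ln_div)
  qed
  ultimately have "ln (q^(K+1)) \<le> ln (1/4)" by (simp add: ln_div)
  then show ?thesis unfolding K_def[symmetric] using q by simp
qed

lemma keyfact: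
  fixes q :: real
  assumes q: "0 < q" "q < 1" and K4: "q^(K+1) \<le> 1/4" and k: "K \<le> k"
  shows "littleqLegendre q (n+k) (1-q^n) \<noteq> 0 \<and>
    (\<exists>\<rho>. 0 < \<rho> \<and> \<rho> < 4 \<and>
       littleqLegendre q (n+k+1) (1-q^n) = -(q^(k+1)*\<rho>) * littleqLegendre q (n+k) (1-q^n))"
proof -
  note S0 = SS0[OF q]
  note Srec = SSrec[OF q]
  have Sp: "SS q n k > 0" "SS q n (k+1) > 0"
    using Spos[OF q S0 Srec K4] k by auto
  have R: "SS q n (k+1) < 4 * SS q n k"
    using ratio4[OF q S0 Srec K4 k] by blast
  have a1: "littleqLegendre q (n+k) (1-q^n) = (-1)^k * q^(tri k) * SS q n k" using alpha_SS[OF q] by blast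
  have a2: "littleqLegendre q (n+k+1) (1-q^n) = -((-1)^k * q^(tri k) * q^(k+1) * SS q n (k+1))"
    using alpha_SS[OF q, of n "k+1"] by (simp add: tri_Suc power_add)
  define \<rho> where "\<rho> = SS q n (k+1) / SS q n k"
  have "0 < \<rho>" "\<rho> < 4" unfolding \<rho>_def using Sp R by (simp_all add: field_simps)
  moreover have "littleqLegendre q (n+k+1) (1-q^n) = -(q^(k+1)*\<rho>) * littleqLegendre q (n+k) (1-q^n)"
    unfolding a1 a2 \<rho>_def using Sp by (simp add: field_simps)
  moreover have "littleqLegendre q (n+k) (1-q^n) \<noteq> 0" unfolding a1 using Sp q by simp
  ultimately show ?thesis by blast
qed

lemma bound1:
  fixes q :: real
  assumes q: "0 < q" "q < 1" and K: "K = nat \<lceil>ln 4 / ln (1 / q) - 1\<rceil>"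
  shows "\<bar>littleqLegendre q (n+K) (1-q^n)\<bar> \<le> 1"
  using bound_gen[OF q] K4_lemma[OF q] K by simp

theorem lemma2p3:
  fixes q :: real
  assumes "0 < q" "q < 1"
  defines "\<alpha> \<equiv> \<lambda>x m. littleqLegendre q m x"
  defines "K \<equiv> nat \<lceil>ln 4 / ln (1 / q) - 1\<rceil>"
  shows "(\<forall>n k. K \<le> k \<longrightarrow>
            \<alpha> (1 - q ^ n) (n + k) \<noteq> 0 \<and>
            \<bar>\<alpha> (1 - q ^ n) (n + k + 1) / (\<alpha> (1 - q ^ n) (n + k) * q ^ (k + 1))\<bar> < 4)
       \<and> (\<forall>n k. K \<le> k \<longrightarrow> \<alpha> (1 - q ^ n) (n + k + 1) / \<alpha> (1 - q ^ n) (n + k) < 0)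
       \<and> (\<forall>n k. K \<le> k \<longrightarrow> \<bar>\<alpha> (1 - q ^ n) (n + k + 1)\<bar> < \<bar>\<alpha> (1 - q ^ n) (n + k)\<bar>)
       \<and> (\<forall>n k. \<bar>\<alpha> (1 - q ^ n) (n + K + k)\<bar>
                 \<le> 4 ^ k * q ^ ((2 * K + k + 1) * k div 2) * \<bar>\<alpha> (1 - q ^ n) (n + K)\<bar>
              \<and> 4 ^ k * q ^ ((2 * K + k + 1) * k div 2) * \<bar>\<alpha> (1 - q ^ n) (n + K)\<bar>
                 \<le> 4 ^ k * q ^ ((2 * K + k + 1) * k div 2))"
proof -
  have q: "0 < q" "q < 1" using assms(1,2) by auto
  have K4: "q^(K+1) \<le> 1/4" unfolding K_def using K4_lemma[OF q] .
  have qk: "4 * q^(k+1) \<le> 1" if "K \<le> k" for k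
  proof -
    have "q^(k+1) \<le> q^(K+1)" using q that by (intro power_decreasing) auto
    then show ?thesis using K4 by simp
  qed
  have kf: "\<alpha> (1-q^n) (n+k) \<noteq> 0 \<and> (\<exists>\<rho>. 0 < \<rho> \<and> \<rho> < 4 \<and>
       \<alpha> (1-q^n) (n+k+1) = -(q^(k+1)*\<rho>) * \<alpha> (1-q^n) (n+k))" if "K \<le> k" for n k
    unfolding \<alpha>_def using keyfact[OF q K4 that] by simp
  have P1: "\<alpha> (1 - q ^ n) (n + k) \<noteq> 0 \<and>
            \<bar>\<alpha> (1 - q ^ n) (n + k + 1) / (\<alpha> (1 - q ^ n) (n + k) * q ^ (k + 1))\<bar> < 4"
    and P2: "\<alpha> (1 - q ^ n) (n + k + 1) / \<alpha> (1 - q ^ n) (n + k) < 0"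
    and P3: "\<bar>\<alpha> (1 - q ^ n) (n + k + 1)\<bar> \<le> 4 * q^(k+1) * \<bar>\<alpha> (1 - q ^ n) (n + k)\<bar>"
    and P3': "\<bar>\<alpha> (1 - q ^ n) (n + k + 1)\<bar> < \<bar>\<alpha> (1 - q ^ n) (n + k)\<bar>"
    if kk: "K \<le> k" for n k
  proof -
    obtain \<rho> where r: "0 < \<rho>" "\<rho> < 4" and e: "\<alpha> (1-q^n) (n+k+1) = -(q^(k+1)*\<rho>) * \<alpha> (1-q^n) (n+k)"
      using kf[OF kk] by blast
    have nz: "\<alpha> (1-q^n) (n+k) \<noteq> 0" using kf[OF kk] by blast
    have qp: "q^(k+1) > 0" using q by simp
    show "\<alpha> (1 - q ^ n) (n + k) \<noteq> 0 \<and>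
            \<bar>\<alpha> (1 - q ^ n) (n + k + 1) / (\<alpha> (1 - q ^ n) (n + k) * q ^ (k + 1))\<bar> < 4"
      unfolding e using nz qp r by simp
    show "\<alpha> (1 - q ^ n) (n + k + 1) / \<alpha> (1 - q ^ n) (n + k) < 0"
      unfolding e using nz qp r by (simp add: mult_pos_pos)
    have ab: "\<bar>\<alpha> (1 - q ^ n) (n + k + 1)\<bar> = q^(k+1)*\<rho> * \<bar>\<alpha> (1 - q ^ n) (n + k)\<bar>"
    proof -
      have "\<bar>-(q^(k+1)*\<rho>)\<bar> = q^(k+1)*\<rho>" using qp r by simp
      then show ?thesis unfolding e abs_mult by simp
    qed
    have "q^(k+1)*\<rho> \<le> q^(k+1)*4" using qp r by (intro mult_left_mono) auto
    then have "q^(k+1)*\<rho> * \<bar>\<alpha> (1 - q ^ n) (n + k)\<bar> \<le> (4*q^(k+1)) * \<bar>\<alpha> (1 - q ^ n) (n + k)\<bar>"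
      by (intro mult_right_mono) (auto simp: mult.commute)
    then show "\<bar>\<alpha> (1 - q ^ n) (n + k + 1)\<bar> \<le> 4 * q^(k+1) * \<bar>\<alpha> (1 - q ^ n) (n + k)\<bar>" using ab by simp
    have "q^(k+1)*\<rho> < q^(k+1)*4" using qp r by (intro mult_strict_left_mono) auto
    then have "q^(k+1)*\<rho> < 1" using qk[OF kk] by simp
    then show "\<bar>\<alpha> (1 - q ^ n) (n + k + 1)\<bar> < \<bar>\<alpha> (1 - q ^ n) (n + k)\<bar>"
      unfolding ab using nz by simp
  qed
  have P4: "\<bar>\<alpha> (1 - q ^ n) (n + K + k)\<bar>
                 \<le> 4 ^ k * q ^ ((2 * K + k + 1) * k div 2) * \<bar>\<alpha> (1 - q ^ n) (n + K)\<bar>" for n k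
  proof (induction k)
    case 0 then show ?case by simp
  next
    case (Suc k)
    have ex: "(2 * K + Suc k + 1) * Suc k div 2 = (2 * K + k + 1) * k div 2 + (K + k + 1)"
    proof -
      have "(2 * K + Suc k + 1) * Suc k = (2 * K + k + 1) * k + 2 * (K + k + 1)" by (simp add: algebra_simps)
      then show ?thesis by simp
    qed
    have "\<bar>\<alpha> (1 - q ^ n) (n + K + Suc k)\<bar> \<le> 4 * q^(K+k+1) * \<bar>\<alpha> (1 - q ^ n) (n + (K + k))\<bar>"
      using P3[of "K+k" n] by (simp add: add.assoc)
    also have "\<dots> \<le> 4 * q^(K+k+1) * (4 ^ k * q ^ ((2 * K + k + 1) * k div 2) * \<bar>\<alpha> (1 - q ^ n) (n + K)\<bar>)"
      using Suc.IH q by (intro mult_left_mono) (auto simp: add.assoc)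
    also have "\<dots> = 4 ^ Suc k * q ^ ((2 * K + Suc k + 1) * Suc k div 2) * \<bar>\<alpha> (1 - q ^ n) (n + K)\<bar>"
      unfolding ex by (simp add: power_add algebra_simps)
    finally show ?case .
  qed
  have B: "\<bar>\<alpha> (1 - q ^ n) (n + K)\<bar> \<le> 1" for n
  proof -
    have "K = nat \<lceil>ln 4 / ln (1 / q) - 1\<rceil>" unfolding K_def ..
    then show ?thesis unfolding \<alpha>_def using bound1[OF q] by blast
  qed
  show ?thesis
  proof (intro conjI allI impI)
    fix n k assume "K \<le> k"
    then show "\<alpha> (1 - q ^ n) (n + k) \<noteq> 0" "\<bar>\<alpha> (1 - q ^ n) (n + k + 1) / (\<alpha> (1 - q ^ n) (n + k) * q ^ (k + 1))\<bar> < 4"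
      "\<alpha> (1 - q ^ n) (n + k + 1) / \<alpha> (1 - q ^ n) (n + k) < 0"
      "\<bar>\<alpha> (1 - q ^ n) (n + k + 1)\<bar> < \<bar>\<alpha> (1 - q ^ n) (n + k)\<bar>"
      using P1 P2 P3' by auto
  next
    fix n k
    show "\<bar>\<alpha> (1 - q ^ n) (n + K + k)\<bar>
                 \<le> 4 ^ k * q ^ ((2 * K + k + 1) * k div 2) * \<bar>\<alpha> (1 - q ^ n) (n + K)\<bar>" by (rule P4)
    have "0 \<le> (4::real) ^ k * q ^ ((2 * K + k + 1) * k div 2)" using q by simp
    then show "4 ^ k * q ^ ((2 * K + k + 1) * k div 2) * \<bar>\<alpha> (1 - q ^ n) (n + K)\<bar>
                 \<le> 4 ^ k * q ^ ((2 * K + k + 1) * k div 2)"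
      using B[of n] by (simp add: mult_left_le)
  qed
qed

end
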